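(* Let $\phi=(\phi_1,\phi_2)^T$, $\psi=(\psi_1,\psi_2)^T$ be an orthonormal vector-valued wavelet basis (scaling function and mother wavelet of a vector-valued multiresolution analysis with dilation $2$) of $L^2(\mathbb{R},\mathbb{R}^2)$. For $k=(k_1,k_2)\in\mathbb{Z}^2$ and $j\in\{0,1,2,\dots\}$ define $\Phi^1_k(x,y)=(\phi_1(x-k_1)\phi_1(y-k_2),\ \phi_2(x-k_1)\phi_2(y-k_2))^T$, $\Phi^2_k(x,y)=(\phi_1(x-k_1)\phi_2(y-k_2),\ \phi_2(x-k_1)\phi_1(y-k_2))^T$, $\Psi^1_{j,k}=(\phi_1(2^jx-k_1)\psi_1(2^jy-k_2),\ \phi_2(2^jx-k_1)\psi_2(2^jy-k_2))^T$, $\Psi^2_{j,k}=(\phi_1(2^jx-k_1)\psi_2(2^jy-k_2),\ \phi_2(2^jx-k_1)\psi_1(2^jy-k_2))^T$, $\Psi^3_{j,k}=(\psi_1(2^jx-k_1)\phi_1(2^jy-k_2),\ \psi_2(2^jx-k_1)\phi_2(2^jy-k_2))^T$, $\Psi^4_{j,k}=(\psi_1(2^jx-k_1)\phi_2(2^jy-k_2),\ \psi_2(2^jx-k_1)\phi_1(2^jy-k_2))^T$, $\Psi^5_{j,k}=(\psi_1(2^jx-k_1)\psi_1(2^jy-k_2),\ \psi_2(2^jx-k_1)\psi_2(2^jy-k_2))^T$, $\Psi^6_{j,k}=(\psi_1(2^jx-k_1)\psi_2(2^jy-k_2),\ \psi_2(2^jx-k_1)\psi_1(2^jy-k_2))^T$.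 Then $\{\Phi^i_k\}_{i\in\{1,2\},k\in\mathbb{Z}^2}\cup\{\Psi^i_{j,k}\}_{i\in\{1,\dots,6\},k\in\mathbb{Z}^2,j\ge0}$ is an orthogonal basis of $L^2(\mathbb{R}^2,\mathbb{R}^2)$.
   Context: $L^2(\mathbb{R}^d,\mathbb{R}^2)$: square-integrable $h=(h_1,h_2)^T$ on $\mathbb{R}^d$; $*$-product $\langle f,g\rangle_*=\int f(x)g(x)^Tdx\in\mathcal{M}_{2\times2}(\mathbb{R})$. A family $\{U_k\}$ is orthogonal if $\langle U_k,U_u\rangle_*=0$ for $k\ne u$ and $\langle U_k,U_k\rangle_*$ is a positive multiple of $I_{2\times2}$; it is a basis if every $f$ has a unique expansion $f=\sum_kQ_kU_k$ with $2\times2$ real matrix coefficients, convergent in $L^2$. A vector-valued multiresolution analysis with scaling function $\phi$ and dilation $2$: closed subspaces $V_j$ with $V_j\subset V_{j+1}$, $\bigcap V_j=\{0\}$, $\bigcup V_j$ dense, $h\in V_j\iff h(2\cdot)\in V_{j+1}$, $h\in V_j\iff h(\cdot-k)\in V_j$, $\{\phi(\cdot-k)\}$ an orthonormal basis of $V_0$; the mother wavelet $\psi$ has $\{\psi(\cdot-k)\}$ an orthonormal basis of $V_1\ominus V_0$, and $\{\phi(\cdot-k)\}\cup\{2^{j/2}\psi(2^j\cdot-k)\}_{j\ge0}$ is an orthonormal basis of $L^2(\mathbb{R},\mathbb{R}^2)$. *)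

theory Defs
  imports "HOL-Analysis.Analysis"
begin

definition vec2 :: "real \<Rightarrow> real \<Rightarrow> real^2" where
  "vec2 a b = (\<chi> i. if i = 1 then a else b)"

definition L2 :: "('a::euclidean_space \<Rightarrow> real^2) set" where
  "L2 = {f. f \<in> borel_measurable lborel \<and> integrable lborel (\<lambda>x. (norm (f x))\<^sup>2)}"

definition L2_norm :: "('a::euclidean_space \<Rightarrow> real^2) \<Rightarrow> real" where
  "L2_norm f = sqrt (LINT x|lborel. (norm (f x))\<^sup>2)"

definition star_prod :: "('a::euclidean_space \<Rightarrow> real^2) \<Rightarrow> ('a \<Rightarrow> real^2) \<Rightarrow> real^2^2" where
  "star_prod f g = (\<chi> i j. LINT x|lborel. f x $ i * g x $ j)"

definition orthogonal_family :: "('i \<Rightarrow> 'a::euclidean_space \<Rightarrow> real^2) \<Rightarrow> 'i set \<Rightarrow> bool" where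
  "orthogonal_family U I \<longleftrightarrow>
     (\<forall>k\<in>I. \<forall>u\<in>I. k \<noteq> u \<longrightarrow> star_prod (U k) (U u) = 0) \<and>
     (\<forall>k\<in>I. \<exists>c>0. star_prod (U k) (U k) = c *\<^sub>R mat 1)"

definition orthonormal_family :: "('i \<Rightarrow> 'a::euclidean_space \<Rightarrow> real^2) \<Rightarrow> 'i set \<Rightarrow> bool" where
  "orthonormal_family U I \<longleftrightarrow>
     (\<forall>k\<in>I. \<forall>u\<in>I. star_prod (U k) (U u) = (if k = u then mat 1 else 0))"

text \<open>f = sum over I of Q_k U_k, convergent (unconditionally, i.e. along the net of finite
  subsets of I) in the L^2 norm.\<close>
definition L2_expansion ::
  "('a::euclidean_space \<Rightarrow> real^2) \<Rightarrow> ('i \<Rightarrow> real^2^2) \<Rightarrow> ('i \<Rightarrow> 'a \<Rightarrow> real^2) \<Rightarrow> 'i set \<Rightarrow> bool" where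
  "L2_expansion f Q U I \<longleftrightarrow>
     (\<forall>e>0. \<exists>F0. finite F0 \<and> F0 \<subseteq> I \<and>
        (\<forall>F. finite F \<and> F0 \<subseteq> F \<and> F \<subseteq> I \<longrightarrow>
           L2_norm (\<lambda>x. f x - (\<Sum>k\<in>F. Q k *v U k x)) < e))"

definition basis_of :: "('a::euclidean_space \<Rightarrow> real^2) set \<Rightarrow> ('i \<Rightarrow> 'a \<Rightarrow> real^2) \<Rightarrow> 'i set \<Rightarrow> bool" where
  "basis_of S U I \<longleftrightarrow> (\<forall>k\<in>I. U k \<in> S) \<and>
     (\<forall>f\<in>S. \<exists>Q. L2_expansion f Q U I \<and>
        (\<forall>Q'. L2_expansion f Q' U I \<longrightarrow> (\<forall>k\<in>I. Q' k = Q k)))"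

definition orthogonal_basis :: "('a::euclidean_space \<Rightarrow> real^2) set \<Rightarrow> ('i \<Rightarrow> 'a \<Rightarrow> real^2) \<Rightarrow> 'i set \<Rightarrow> bool" where
  "orthogonal_basis S U I \<longleftrightarrow> orthogonal_family U I \<and> basis_of S U I"

definition orthonormal_basis :: "('a::euclidean_space \<Rightarrow> real^2) set \<Rightarrow> ('i \<Rightarrow> 'a \<Rightarrow> real^2) \<Rightarrow> 'i set \<Rightarrow> bool" where
  "orthonormal_basis S U I \<longleftrightarrow> orthonormal_family U I \<and> basis_of S U I"

definition closed_L2_subspace :: "(real \<Rightarrow> real^2) set \<Rightarrow> bool" where
  "closed_L2_subspace V \<longleftrightarrow> V \<subseteq> L2 \<and> (\<lambda>x. 0) \<in> V \<and>
     (\<forall>f\<in>V. \<forall>g\<in>V. (\<lambda>x. f x + g x) \<in> V) \<and>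
     (\<forall>c f. f \<in> V \<longrightarrow> (\<lambda>x. c *\<^sub>R f x) \<in> V) \<and>
     (\<forall>h s. (\<forall>n. s n \<in> V) \<and> h \<in> L2 \<and> (\<lambda>n. L2_norm (\<lambda>x. s n x - h x)) \<longlonglongrightarrow> 0 \<longrightarrow> h \<in> V)"

text \<open>Vector-valued MRA with dilation 2 and scaling function phi. Equality with 0 in the
  intersection axiom is in the L^2 sense.\<close>
definition vector_MRA :: "(int \<Rightarrow> (real \<Rightarrow> real^2) set) \<Rightarrow> (real \<Rightarrow> real^2) \<Rightarrow> bool" where
  "vector_MRA V \<phi> \<longleftrightarrow>
     (\<forall>j. closed_L2_subspace (V j)) \<and>
     (\<forall>j. V j \<subseteq> V (j + 1)) \<and>
     (\<forall>h. (\<forall>j. h \<in> V j) \<longrightarrow> L2_norm h = 0) \<and>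
     (\<forall>f\<in>L2. \<forall>e>0. \<exists>j. \<exists>h\<in>V j. L2_norm (\<lambda>x. f x - h x) < e) \<and>
     (\<forall>j h. h \<in> V j \<longleftrightarrow> (\<lambda>x. h (2 * x)) \<in> V (j + 1)) \<and>
     (\<forall>j h (k::int). h \<in> V j \<longleftrightarrow> (\<lambda>x. h (x - of_int k)) \<in> V j) \<and>
     orthonormal_basis (V 0) (\<lambda>(k::int) x. \<phi> (x - of_int k)) UNIV"

definition wavelet_system :: "(real \<Rightarrow> real^2) \<Rightarrow> (real \<Rightarrow> real^2) \<Rightarrow> int + (nat \<times> int) \<Rightarrow> real \<Rightarrow> real^2" where
  "wavelet_system \<phi> \<psi> idx = (case idx of
      Inl k \<Rightarrow> (\<lambda>x. \<phi> (x - of_int k))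
    | Inr (j, k) \<Rightarrow> (\<lambda>x. (sqrt 2) ^ j *\<^sub>R \<psi> (2 ^ j * x - of_int k)))"

definition vector_wavelet :: "(real \<Rightarrow> real^2) \<Rightarrow> (real \<Rightarrow> real^2) \<Rightarrow> bool" where
  "vector_wavelet \<phi> \<psi> \<longleftrightarrow>
     (\<exists>V. vector_MRA V \<phi> \<and>
        orthonormal_basis {h \<in> V 1. \<forall>g\<in>V 0. star_prod h g = 0} (\<lambda>(k::int) x. \<psi> (x - of_int k)) UNIV) \<and>
     orthonormal_basis L2 (wavelet_system \<phi> \<psi>) UNIV"

definition Phi1 :: "(real \<Rightarrow> real^2) \<Rightarrow> int \<times> int \<Rightarrow> real \<times> real \<Rightarrow> real^2" where
  "Phi1 \<phi> k = (\<lambda>(x, y). vec2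
      (\<phi> (x - of_int (fst k)) $ 1 * \<phi> (y - of_int (snd k)) $ 1)
      (\<phi> (x - of_int (fst k)) $ 2 * \<phi> (y - of_int (snd k)) $ 2))"

definition Phi2 :: "(real \<Rightarrow> real^2) \<Rightarrow> int \<times> int \<Rightarrow> real \<times> real \<Rightarrow> real^2" where
  "Phi2 \<phi> k = (\<lambda>(x, y). vec2
      (\<phi> (x - of_int (fst k)) $ 1 * \<phi> (y - of_int (snd k)) $ 2)
      (\<phi> (x - of_int (fst k)) $ 2 * \<phi> (y - of_int (snd k)) $ 1))"

definition tens :: "bool \<Rightarrow> (real \<Rightarrow> real^2) \<Rightarrow> (real \<Rightarrow> real^2) \<Rightarrow> nat \<Rightarrow> int \<times> int \<Rightarrow> real \<times> real \<Rightarrow> real^2" where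
  "tens swap a b j k = (\<lambda>(x, y). vec2
      (a (2 ^ j * x - of_int (fst k)) $ 1 * b (2 ^ j * y - of_int (snd k)) $ (if swap then 2 else 1))
      (a (2 ^ j * x - of_int (fst k)) $ 2 * b (2 ^ j * y - of_int (snd k)) $ (if swap then 1 else 2)))"

definition Psi1 :: "(real \<Rightarrow> real^2) \<Rightarrow> (real \<Rightarrow> real^2) \<Rightarrow> nat \<Rightarrow> int \<times> int \<Rightarrow> real \<times> real \<Rightarrow> real^2" where
  "Psi1 \<phi> \<psi> = tens False \<phi> \<psi>"
definition Psi2 :: "(real \<Rightarrow> real^2) \<Rightarrow> (real \<Rightarrow> real^2) \<Rightarrow> nat \<Rightarrow> int \<times> int \<Rightarrow> real \<times> real \<Rightarrow> real^2" where
  "Psi2 \<phi> \<psi> = tens True \<phi> \<psi>"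
definition Psi3 :: "(real \<Rightarrow> real^2) \<Rightarrow> (real \<Rightarrow> real^2) \<Rightarrow> nat \<Rightarrow> int \<times> int \<Rightarrow> real \<times> real \<Rightarrow> real^2" where
  "Psi3 \<phi> \<psi> = tens False \<psi> \<phi>"
definition Psi4 :: "(real \<Rightarrow> real^2) \<Rightarrow> (real \<Rightarrow> real^2) \<Rightarrow> nat \<Rightarrow> int \<times> int \<Rightarrow> real \<times> real \<Rightarrow> real^2" where
  "Psi4 \<phi> \<psi> = tens True \<psi> \<phi>"
definition Psi5 :: "(real \<Rightarrow> real^2) \<Rightarrow> (real \<Rightarrow> real^2) \<Rightarrow> nat \<Rightarrow> int \<times> int \<Rightarrow> real \<times> real \<Rightarrow> real^2" where
  "Psi5 \<phi> \<psi> = tens False \<psi> \<psi>"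
definition Psi6 :: "(real \<Rightarrow> real^2) \<Rightarrow> (real \<Rightarrow> real^2) \<Rightarrow> nat \<Rightarrow> int \<times> int \<Rightarrow> real \<times> real \<Rightarrow> real^2" where
  "Psi6 \<phi> \<psi> = tens True \<psi> \<psi>"

datatype tidx = PhiIdx nat "int \<times> int" | PsiIdx nat nat "int \<times> int"

definition tensor_index :: "tidx set" where
  "tensor_index = {PhiIdx i k |i k. i \<in> {1, 2}} \<union> {PsiIdx i j k |i j k. i \<in> {1..6}}"

fun tensor_family :: "(real \<Rightarrow> real^2) \<Rightarrow> (real \<Rightarrow> real^2) \<Rightarrow> tidx \<Rightarrow> real \<times> real \<Rightarrow> real^2" where
  "tensor_family \<phi> \<psi> (PhiIdx i k) = (if i = 1 then Phi1 \<phi> k else Phi2 \<phi> k)"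
| "tensor_family \<phi> \<psi> (PsiIdx i j k) =
     (if i = 1 then Psi1 \<phi> \<psi> j k else if i = 2 then Psi2 \<phi> \<psi> j k
      else if i = 3 then Psi3 \<phi> \<psi> j k else if i = 4 then Psi4 \<phi> \<psi> j k
      else if i = 5 then Psi5 \<phi> \<psi> j k else Psi6 \<phi> \<psi> j k)"

end

theory Submission
  imports Defs
begin

definition sq :: "'a measure \<Rightarrow> ('a \<Rightarrow> real) \<Rightarrow> bool" where
  "sq M f \<longleftrightarrow> f \<in> borel_measurable M \<and> integrable M (\<lambda>x. (f x)\<^sup>2)"

definition ip :: "'a measure \<Rightarrow> ('a \<Rightarrow> real) \<Rightarrow> ('a \<Rightarrow> real) \<Rightarrow> real" where
  "ip M f g = (\<integral>x. f x * g x \<partial>M)"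

lemma sq_meas: "sq M f \<Longrightarrow> f \<in> borel_measurable M"
  by (simp add: sq_def)

lemma sq_int: "sq M f \<Longrightarrow> integrable M (\<lambda>x. (f x)\<^sup>2)"
  by (simp add: sq_def)

lemma sq_mult_integrable:
  assumes "sq M f" "sq M g"
  shows "integrable M (\<lambda>x. f x * g x)"
proof (rule Bochner_Integration.integrable_bound)
  show "integrable M (\<lambda>x. (f x)\<^sup>2 + (g x)\<^sup>2)"
    using assms by (simp add: sq_def)
  show "(\<lambda>x. f x * g x) \<in> borel_measurable M"
    using assms by (auto simp: sq_def)
  show "AE x in M. norm (f x * g x) \<le> norm ((f x)\<^sup>2 + (g x)\<^sup>2)"
  proof (rule AE_I2)
    fix x
    have "2 * (\<bar>f x\<bar> * \<bar>g x\<bar>) \<le> (f x)\<^sup>2 + (g x)\<^sup>2"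
      using sum_squares_bound[of "\<bar>f x\<bar>" "\<bar>g x\<bar>"] by (simp only: power2_abs mult.assoc)
    moreover have "0 \<le> \<bar>f x\<bar> * \<bar>g x\<bar>" by simp
    ultimately have "\<bar>f x * g x\<bar> \<le> (f x)\<^sup>2 + (g x)\<^sup>2"
      unfolding abs_mult by linarith
    then show "norm (f x * g x) \<le> norm ((f x)\<^sup>2 + (g x)\<^sup>2)" by simp
  qed
qed

lemma sq_zero[simp]: "sq M (\<lambda>x. 0)"
  by (simp add: sq_def)

lemma sq_cmult: "sq M f \<Longrightarrow> sq M (\<lambda>x. c * f x)"
  by (auto simp: sq_def power_mult_distrib)

lemma sq_add: assumes "sq M f" "sq M g" shows "sq M (\<lambda>x. f x + g x)"
proof -
  have "integrable M (\<lambda>x. (f x)\<^sup>2 + (g x)\<^sup>2 + 2 * (f x * g x))"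
    using assms sq_mult_integrable[OF assms] by (simp add: sq_def)
  then show ?thesis using assms by (auto simp: sq_def power2_sum mult.assoc)
qed

lemma sq_uminus: "sq M f \<Longrightarrow> sq M (\<lambda>x. - f x)"
  using sq_cmult[of M f "-1"] by simp

lemma sq_diff: assumes "sq M f" "sq M g" shows "sq M (\<lambda>x. f x - g x)"
  using sq_add[OF assms(1) sq_uminus[OF assms(2)]] by simp

lemma sq_sum: "finite F \<Longrightarrow> (\<And>i. i \<in> F \<Longrightarrow> sq M (f i)) \<Longrightarrow> sq M (\<lambda>x. \<Sum>i\<in>F. f i x)"
  by (induction F rule: finite_induct) (auto intro: sq_add)

lemma ip_sym: "ip M f g = ip M g f"
  by (simp add: ip_def mult.commute)

lemma ip_add_left: "sq M f \<Longrightarrow> sq M g \<Longrightarrow> sq M h \<Longrightarrow> ip M (\<lambda>x. f x + g x) h = ip M f h + ip M g h"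
  unfolding ip_def by (simp add: distrib_right sq_mult_integrable)

lemma ip_diff_left: "sq M f \<Longrightarrow> sq M g \<Longrightarrow> sq M h \<Longrightarrow> ip M (\<lambda>x. f x - g x) h = ip M f h - ip M g h"
  unfolding ip_def by (simp add: left_diff_distrib sq_mult_integrable)

lemma ip_cmult_left: "ip M (\<lambda>x. c * f x) h = c * ip M f h"
  unfolding ip_def by (simp add: mult.assoc)

lemma ip_sum_left:
  "finite F \<Longrightarrow> (\<And>i. i \<in> F \<Longrightarrow> sq M (f i)) \<Longrightarrow> sq M h \<Longrightarrow>
    ip M (\<lambda>x. \<Sum>i\<in>F. f i x) h = (\<Sum>i\<in>F. ip M (f i) h)"
  unfolding ip_def by (simp add: sum_distrib_right sq_mult_integrable)

lemma ip_add_right: "sq M f \<Longrightarrow> sq M g \<Longrightarrow> sq M h \<Longrightarrow> ip M h (\<lambda>x. f x + g x) = ip M h f + ip M h g"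
  unfolding ip_def by (simp add: distrib_left sq_mult_integrable)

lemma ip_diff_right: "sq M f \<Longrightarrow> sq M g \<Longrightarrow> sq M h \<Longrightarrow> ip M h (\<lambda>x. f x - g x) = ip M h f - ip M h g"
  unfolding ip_def by (simp add: right_diff_distrib sq_mult_integrable)

lemma ip_cmult_right: "ip M h (\<lambda>x. c * f x) = c * ip M h f"
  unfolding ip_def by (simp add: algebra_simps)

lemma ip_sum_right:
  "finite F \<Longrightarrow> (\<And>i. i \<in> F \<Longrightarrow> sq M (f i)) \<Longrightarrow> sq M h \<Longrightarrow>
    ip M h (\<lambda>x. \<Sum>i\<in>F. f i x) = (\<Sum>i\<in>F. ip M h (f i))"
  unfolding ip_def by (simp add: sum_distrib_left sq_mult_integrable)

lemma ip_self: "ip M f f = (\<integral>x. (f x)\<^sup>2 \<partial>M)"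
  by (simp add: ip_def power2_eq_square)

lemma ip_self_nonneg: "ip M f f \<ge> 0"
  by (simp add: ip_self)

lemma cauchy_schwarz_ip:
  assumes f: "sq M f" and g: "sq M g"
  shows "(ip M f g)\<^sup>2 \<le> ip M f f * ip M g g"
proof -
  define A B C where "A = ip M f f" "B = ip M f g" "C = ip M g g"
  have key: "0 \<le> A - 2 * t * B + t\<^sup>2 * C" for t
  proof -
    have "0 \<le> ip M (\<lambda>x. f x - t * g x) (\<lambda>x. f x - t * g x)" by (rule ip_self_nonneg)
    also have "\<dots> = ip M f (\<lambda>x. f x - t * g x) - ip M (\<lambda>x. t * g x) (\<lambda>x. f x - t * g x)"
      using f g sq_cmult[OF g, of t] sq_diff[OF f sq_cmult[OF g, of t]] by (simp add: ip_diff_left)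
    also have "\<dots> = (A - t * B) - t * (ip M g f - t * C)"
      using f g sq_cmult[OF g, of t] unfolding A_B_C_def
      by (simp add: ip_diff_right ip_cmult_left ip_cmult_right)
    also have "\<dots> = A - 2 * t * B + t\<^sup>2 * C"
      unfolding A_B_C_def ip_sym[of M g f] by (simp add: power2_eq_square right_diff_distrib)
    finally show ?thesis .
  qed
  have C0: "C \<ge> 0" unfolding A_B_C_def by (rule ip_self_nonneg)
  show ?thesis
  proof (cases "C = 0")
    case True
    have "B = 0"
    proof (rule ccontr)
      assume "B \<noteq> 0"
      have "0 \<le> A - 2 * ((A + 1) / (2 * B)) * B" using key[of "(A + 1) / (2 * B)"] True by simp
      also have "\<dots> = -1" using \<open>B \<noteq> 0\<close> by (simp add: field_simps)
      finally show False by simp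
    qed
    then show ?thesis using True by (simp add: A_B_C_def)
  next
    case False
    with C0 have "C > 0" by simp
    have "0 \<le> A - 2 * (B / C) * B + (B / C)\<^sup>2 * C" by (rule key)
    also have "\<dots> = A - B\<^sup>2 / C" using \<open>C > 0\<close> by (simp add: field_simps power2_eq_square)
    finally have "B\<^sup>2 / C \<le> A" by simp
    then have "B\<^sup>2 \<le> A * C" using \<open>C > 0\<close> by (simp add: field_simps)
    then show ?thesis by (simp add: A_B_C_def)
  qed
qed

definition ON :: "'a measure \<Rightarrow> ('i \<Rightarrow> 'a \<Rightarrow> real) \<Rightarrow> 'i set \<Rightarrow> bool" where
  "ON M e I \<longleftrightarrow> (\<forall>i\<in>I. sq M (e i)) \<and> (\<forall>i\<in>I. \<forall>j\<in>I. ip M (e i) (e j) = (if i = j then 1 else 0))"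

lemma bessel_identity:
  assumes on: "ON M e I" and F: "finite F" "F \<subseteq> I" and g: "sq M g"
  shows "ip M (\<lambda>x. g x - (\<Sum>i\<in>F. c i * e i x)) (\<lambda>x. g x - (\<Sum>i\<in>F. c i * e i x)) =
    ip M g g - (\<Sum>i\<in>F. (ip M g (e i))\<^sup>2) + (\<Sum>i\<in>F. (c i - ip M g (e i))\<^sup>2)"
proof -
  have sqe: "\<And>i. i \<in> F \<Longrightarrow> sq M (e i)" using on F unfolding ON_def by auto
  have sqce: "\<And>i. i \<in> F \<Longrightarrow> sq M (\<lambda>x. c i * e i x)" using sqe by (simp add: sq_cmult)
  define s where "s = (\<lambda>x. \<Sum>i\<in>F. c i * e i x)"
  have sqs: "sq M s" unfolding s_def by (rule sq_sum[OF F(1) sqce])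
  have gs: "ip M g s = (\<Sum>i\<in>F. c i * ip M g (e i))"
    unfolding s_def using ip_sum_right[OF F(1) sqce g]
    by (simp add: ip_cmult_right)
  have ss: "ip M s s = (\<Sum>i\<in>F. (c i)\<^sup>2)"
  proof -
    have "ip M s s = (\<Sum>i\<in>F. c i * ip M (e i) s)"
      unfolding s_def[of] using ip_sum_left[OF F(1) sqce sqs] by (simp add: ip_cmult_left s_def)
    also have "\<dots> = (\<Sum>i\<in>F. c i * (\<Sum>j\<in>F. c j * ip M (e i) (e j)))"
    proof (rule sum.cong[OF refl])
      fix i assume i: "i \<in> F"
      have "ip M (e i) s = (\<Sum>j\<in>F. c j * ip M (e i) (e j))"
        using ip_sum_right[OF F(1) sqce sqe[OF i]] unfolding s_def
        by (simp add: ip_cmult_right)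
      then show "c i * ip M (e i) s = c i * (\<Sum>j\<in>F. c j * ip M (e i) (e j))" by simp
    qed
    also have "\<dots> = (\<Sum>i\<in>F. (c i)\<^sup>2)"
    proof (rule sum.cong[OF refl])
      fix i assume i: "i \<in> F"
      have "(\<Sum>j\<in>F. c j * ip M (e i) (e j)) = (\<Sum>j\<in>F. if j = i then c j else 0)"
        using on F i by (intro sum.cong refl) (auto simp: ON_def dest!: subsetD[OF F(2)])
      also have "\<dots> = c i" using i F by simp
      finally show "c i * (\<Sum>j\<in>F. c j * ip M (e i) (e j)) = (c i)\<^sup>2" by (simp add: power2_eq_square)
    qed
    finally show ?thesis .
  qed
  have "ip M (\<lambda>x. g x - s x) (\<lambda>x. g x - s x) = ip M g g - 2 * ip M g s + ip M s s"
    using g sqs sq_diff[OF g sqs]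
    by (simp add: ip_diff_left ip_diff_right ip_sym[of M s g])
  also have "\<dots> = ip M g g - (\<Sum>i\<in>F. (ip M g (e i))\<^sup>2) + (\<Sum>i\<in>F. (c i - ip M g (e i))\<^sup>2)"
  proof -
    have "(\<Sum>i\<in>F. (c i - ip M g (e i))\<^sup>2) = (\<Sum>i\<in>F. (c i)\<^sup>2) - 2 * (\<Sum>i\<in>F. c i * ip M g (e i)) + (\<Sum>i\<in>F. (ip M g (e i))\<^sup>2)"
      by (simp add: power2_diff sum.distrib sum_subtractf sum_distrib_left mult.assoc)
    then show ?thesis unfolding gs ss by linarith
  qed
  finally show ?thesis unfolding s_def .
qed

lemma bessel:
  assumes on: "ON M e I" and F: "finite F" "F \<subseteq> I" and g: "sq M g"
  shows "(\<Sum>i\<in>F. (ip M g (e i))\<^sup>2) \<le> ip M g g"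
proof -
  have "0 \<le> ip M (\<lambda>x. g x - (\<Sum>i\<in>F. ip M g (e i) * e i x)) (\<lambda>x. g x - (\<Sum>i\<in>F. ip M g (e i) * e i x))"
    by (rule ip_self_nonneg)
  also have "\<dots> = ip M g g - (\<Sum>i\<in>F. (ip M g (e i))\<^sup>2)"
    using bessel_identity[OF assms, of "\<lambda>i. ip M g (e i)"] by simp
  finally show ?thesis by simp
qed

lemma bessel_lower:
  assumes on: "ON M e I" and F: "finite F" "F \<subseteq> I" and g: "sq M g"
  shows "ip M g g - (\<Sum>i\<in>F. (ip M g (e i))\<^sup>2) \<le>
     ip M (\<lambda>x. g x - (\<Sum>i\<in>F. c i * e i x)) (\<lambda>x. g x - (\<Sum>i\<in>F. c i * e i x))"
  using bessel_identity[OF assms, of c] by (simp add: sum_nonneg)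

lemma csum_mono_set:
  fixes f :: "'a \<Rightarrow> ennreal"
  assumes "A \<subseteq> B"
  shows "(\<integral>\<^sup>+x. f x \<partial>count_space A) \<le> (\<integral>\<^sup>+x. f x \<partial>count_space B)"
proof -
  have "(\<integral>\<^sup>+x. f x \<partial>count_space A) = (\<integral>\<^sup>+x. f x * indicator A x \<partial>count_space UNIV)"
    by (simp add: nn_integral_restrict_space[symmetric] restrict_count_space)
  also have "\<dots> \<le> (\<integral>\<^sup>+x. f x * indicator B x \<partial>count_space UNIV)"
    using assms by (intro nn_integral_mono) (auto split: split_indicator)
  also have "\<dots> = (\<integral>\<^sup>+x. f x \<partial>count_space B)"
    by (simp add: nn_integral_restrict_space[symmetric] restrict_count_space)
  finally show ?thesis .
qed

lemma csum_finite_le: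
  fixes f :: "'a \<Rightarrow> ennreal"
  assumes "finite F" "F \<subseteq> A"
  shows "(\<Sum>x\<in>F. f x) \<le> (\<integral>\<^sup>+x. f x \<partial>count_space A)"
  using csum_mono_set[OF assms(2), of f] nn_integral_count_space_finite[OF assms(1), of f] by simp

lemma csum_SUP:
  fixes f :: "'a \<Rightarrow> ennreal"
  assumes A: "countable A"
  shows "(\<integral>\<^sup>+x. f x \<partial>count_space A) = (SUP F\<in>{F. finite F \<and> F \<subseteq> A}. (\<Sum>x\<in>F. f x))"
proof (rule antisym)
  show "(SUP F\<in>{F. finite F \<and> F \<subseteq> A}. (\<Sum>x\<in>F. f x)) \<le> (\<integral>\<^sup>+x. f x \<partial>count_space A)"
    by (rule SUP_least) (auto intro: csum_finite_le)
  show "(\<integral>\<^sup>+x. f x \<partial>count_space A) \<le> (SUP F\<in>{F. finite F \<and> F \<subseteq> A}. (\<Sum>x\<in>F. f x))"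
  proof (cases "finite A")
    case True
    then show ?thesis
      by (simp add: nn_integral_count_space_finite) (intro SUP_upper2[of A] order.refl; simp)
  next
    case False
    note bij = bij_betw_from_nat_into[OF A False]
    let ?g = "from_nat_into A"
    have "(\<integral>\<^sup>+x. f x \<partial>count_space A) = (\<integral>\<^sup>+n. f (?g n) \<partial>count_space UNIV)"
      by (simp add: nn_integral_bij_count_space[symmetric, OF bij])
    also have "\<dots> = (\<Sum>n. f (?g n))" by (rule nn_integral_count_space_nat)
    also have "\<dots> = (SUP n. \<Sum>i<n. f (?g i))" by (rule suminf_eq_SUP)
    also have "\<dots> \<le> (SUP F\<in>{F. finite F \<and> F \<subseteq> A}. (\<Sum>x\<in>F. f x))"
    proof (rule SUP_least)
      fix n
      have inj: "inj_on ?g {..<n}" using bij unfolding bij_betw_def by (auto intro: inj_on_subset)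
      have "(\<Sum>i<n. f (?g i)) = (\<Sum>x\<in>?g ` {..<n}. f x)" by (simp add: sum.reindex[OF inj])
      also have "\<dots> \<le> (SUP F\<in>{F. finite F \<and> F \<subseteq> A}. (\<Sum>x\<in>F. f x))"
        using bij by (intro SUP_upper) (auto simp: bij_betw_def)
      finally show "(\<Sum>i<n. f (?g i)) \<le> (SUP F\<in>{F. finite F \<and> F \<subseteq> A}. (\<Sum>x\<in>F. f x))" .
    qed
    finally show ?thesis .
  qed
qed

lemma csum_le_bound:
  fixes f :: "'a \<Rightarrow> ennreal"
  assumes "countable A" "\<And>F. finite F \<Longrightarrow> F \<subseteq> A \<Longrightarrow> (\<Sum>x\<in>F. f x) \<le> c"
  shows "(\<integral>\<^sup>+x. f x \<partial>count_space A) \<le> c"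
  unfolding csum_SUP[OF assms(1)] using assms(2) by (auto intro: SUP_least)

lemma csum_approx:
  fixes f :: "'a \<Rightarrow> ennreal"
  assumes "countable A" "c < (\<integral>\<^sup>+x. f x \<partial>count_space A)"
  shows "\<exists>F. finite F \<and> F \<subseteq> A \<and> c < (\<Sum>x\<in>F. f x)"
  using assms(2) unfolding csum_SUP[OF assms(1)] by (auto simp: less_SUP_iff)

lemma csum_add:
  fixes f g :: "'a \<Rightarrow> ennreal"
  shows "(\<integral>\<^sup>+x. f x + g x \<partial>count_space A) = (\<integral>\<^sup>+x. f x \<partial>count_space A) + (\<integral>\<^sup>+x. g x \<partial>count_space A)"
  by (rule nn_integral_add) auto

lemma csum_cmult:
  fixes f :: "'a \<Rightarrow> ennreal"
  shows "(\<integral>\<^sup>+x. c * f x \<partial>count_space A) = c * (\<integral>\<^sup>+x. f x \<partial>count_space A)"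
  by (rule nn_integral_cmult) auto

lemma csum_sum_type:
  fixes f :: "'a + 'b \<Rightarrow> ennreal"
  shows "(\<integral>\<^sup>+x. f x \<partial>count_space UNIV) =
    (\<integral>\<^sup>+x. f (Inl x) \<partial>count_space UNIV) + (\<integral>\<^sup>+x. f (Inr x) \<partial>count_space UNIV)"
proof -
  have "(\<integral>\<^sup>+x. f x \<partial>count_space UNIV) =
      (\<integral>\<^sup>+x. f x * indicator (range Inl) x + f x * indicator (range Inr) x \<partial>count_space UNIV)"
  proof (intro nn_integral_cong)
    fix x :: "'a + 'b"
    show "f x = f x * indicator (range Inl) x + f x * indicator (range Inr) x"
      by (cases x) (auto split: split_indicator)
  qed
  also have "\<dots> = (\<integral>\<^sup>+x. f x * indicator (range Inl) x \<partial>count_space UNIV) +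
      (\<integral>\<^sup>+x. f x * indicator (range Inr) x \<partial>count_space UNIV)"
    by (rule csum_add)
  also have "(\<integral>\<^sup>+x. f x * indicator (range Inl) x \<partial>count_space UNIV) = (\<integral>\<^sup>+x. f x \<partial>count_space (range Inl))"
    by (simp add: nn_integral_restrict_space[symmetric] restrict_count_space)
  also have "\<dots> = (\<integral>\<^sup>+x. f (Inl x) \<partial>count_space UNIV)"
    by (rule nn_integral_bij_count_space[symmetric]) (auto simp: bij_betw_def)
  also have "(\<integral>\<^sup>+x. f x * indicator (range Inr) x \<partial>count_space UNIV) = (\<integral>\<^sup>+x. f x \<partial>count_space (range Inr))"
    by (simp add: nn_integral_restrict_space[symmetric] restrict_count_space)
  also have "\<dots> = (\<integral>\<^sup>+x. f (Inr x) \<partial>count_space UNIV)"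
    by (rule nn_integral_bij_count_space[symmetric]) (auto simp: bij_betw_def)
  finally show ?thesis .
qed

lemma csum_swap:
  fixes f :: "'a::countable \<Rightarrow> 'b::countable \<Rightarrow> ennreal"
  shows "(\<integral>\<^sup>+x. (\<integral>\<^sup>+y. f x y \<partial>count_space UNIV) \<partial>count_space UNIV) =
    (\<integral>\<^sup>+y. (\<integral>\<^sup>+x. f x y \<partial>count_space UNIV) \<partial>count_space UNIV)"
  by (rule nn_integral_count_space_nn_integral) auto

lemma csum_prod:
  fixes f :: "'a::countable \<times> 'b::countable \<Rightarrow> ennreal"
  shows "(\<integral>\<^sup>+p. f p \<partial>count_space UNIV) = (\<integral>\<^sup>+x. (\<integral>\<^sup>+y. f (x, y) \<partial>count_space UNIV) \<partial>count_space UNIV)"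
proof -
  interpret S: sigma_finite_measure "count_space (UNIV::'b set)"
    by (rule sigma_finite_measure_count_space)
  have eq: "count_space (UNIV::'a set) \<Otimes>\<^sub>M count_space (UNIV::'b set) = count_space UNIV"
    using pair_measure_countable[of "UNIV::'a set" "UNIV::'b set"] by simp
  have "(\<integral>\<^sup>+x. (\<integral>\<^sup>+y. f (x, y) \<partial>count_space UNIV) \<partial>count_space UNIV) =
      integral\<^sup>N (count_space UNIV \<Otimes>\<^sub>M count_space UNIV) f"
    by (rule S.nn_integral_fst) (simp add: eq)
  then show ?thesis by (simp add: eq)
qed

lemma csum_UNIV_bool:
  fixes f :: "bool \<Rightarrow> ennreal"
  shows "(\<integral>\<^sup>+x. f x \<partial>count_space UNIV) = f True + f False"
  by (simp add: nn_integral_count_space_finite UNIV_bool add.commute)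

lemma csum_nat_sum_lessThan:
  fixes f :: "nat \<Rightarrow> nat \<Rightarrow> ennreal"
  shows "(\<integral>\<^sup>+i. (\<integral>\<^sup>+j. f i j \<partial>count_space UNIV) \<partial>count_space UNIV) =
    (\<integral>\<^sup>+j. f j j + (\<Sum>i<j. f i j) + (\<Sum>i<j. f j i) \<partial>count_space UNIV)"
proof -
  have split: "(\<integral>\<^sup>+j. f i j \<partial>count_space UNIV) =
     (\<integral>\<^sup>+j. f i j * indicator {i} j \<partial>count_space UNIV) +
     (\<integral>\<^sup>+j. f i j * indicator {i<..} j \<partial>count_space UNIV) +
     (\<integral>\<^sup>+j. f i j * indicator {..<i} j \<partial>count_space UNIV)" for i
  proof -
    have "(\<integral>\<^sup>+j. f i j \<partial>count_space UNIV) =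
        (\<integral>\<^sup>+j. f i j * indicator {i} j + f i j * indicator {i<..} j + f i j * indicator {..<i} j \<partial>count_space UNIV)"
      by (intro nn_integral_cong) (auto split: split_indicator)
    then show ?thesis by (simp add: csum_add)
  qed
  have A: "(\<integral>\<^sup>+i. (\<integral>\<^sup>+j. f i j * indicator {i} j \<partial>count_space UNIV) \<partial>count_space UNIV) =
      (\<integral>\<^sup>+j. f j j \<partial>count_space UNIV)"
  proof -
    have "(\<integral>\<^sup>+j. f i j * indicator {i} j \<partial>count_space UNIV) = f i i" for i
      by (subst nn_integral_count_space'[of "{i}"]) auto
    then show ?thesis by simp
  qed
  have B: "(\<integral>\<^sup>+i. (\<integral>\<^sup>+j. f i j * indicator {i<..} j \<partial>count_space UNIV) \<partial>count_space UNIV) =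
      (\<integral>\<^sup>+j. (\<Sum>i<j. f i j) \<partial>count_space UNIV)"
  proof -
    have "(\<integral>\<^sup>+i. (\<integral>\<^sup>+j. f i j * indicator {i<..} j \<partial>count_space UNIV) \<partial>count_space UNIV) =
      (\<integral>\<^sup>+j. (\<integral>\<^sup>+i. f i j * indicator {i<..} j \<partial>count_space UNIV) \<partial>count_space UNIV)"
      by (rule csum_swap)
    also have "\<dots> = (\<integral>\<^sup>+j. (\<Sum>i<j. f i j) \<partial>count_space UNIV)"
    proof (intro nn_integral_cong)
      fix j :: nat
      show "(\<integral>\<^sup>+i. f i j * indicator {i<..} j \<partial>count_space UNIV) = (\<Sum>i<j. f i j)"
        by (subst nn_integral_count_space'[of "{..<j}"]) (auto split: split_indicator intro!: sum.cong)
    qed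
    finally show ?thesis .
  qed
  have C: "(\<integral>\<^sup>+i. (\<integral>\<^sup>+j. f i j * indicator {..<i} j \<partial>count_space UNIV) \<partial>count_space UNIV) =
      (\<integral>\<^sup>+i. (\<Sum>j<i. f i j) \<partial>count_space UNIV)"
  proof (intro nn_integral_cong)
    fix i :: nat
    show "(\<integral>\<^sup>+j. f i j * indicator {..<i} j \<partial>count_space UNIV) = (\<Sum>j<i. f i j)"
      by (subst nn_integral_count_space'[of "{..<i}"]) (auto split: split_indicator intro!: sum.cong)
  qed
  have "(\<integral>\<^sup>+i. (\<integral>\<^sup>+j. f i j \<partial>count_space UNIV) \<partial>count_space UNIV) =
     (\<integral>\<^sup>+j. f j j \<partial>count_space UNIV) + (\<integral>\<^sup>+j. (\<Sum>i<j. f i j) \<partial>count_space UNIV) +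
     (\<integral>\<^sup>+i. (\<Sum>j<i. f i j) \<partial>count_space UNIV)"
    unfolding split csum_add A B C ..
  also have "\<dots> = (\<integral>\<^sup>+j. f j j + (\<Sum>i<j. f i j) + (\<Sum>i<j. f j i) \<partial>count_space UNIV)"
    by (simp add: csum_add)
  finally show ?thesis .
qed

abbreviation PL :: "(real \<times> real) measure" where
  "PL \<equiv> (lborel::real measure) \<Otimes>\<^sub>M (lborel::real measure)"

definition tensor :: "(real \<Rightarrow> real) \<Rightarrow> (real \<Rightarrow> real) \<Rightarrow> real \<times> real \<Rightarrow> real" where
  "tensor u v = (\<lambda>(x, y). u x * v y)"

lemma tensor_apply[simp]: "tensor u v (x, y) = u x * v y"
  by (simp add: tensor_def)

lemma measurable_tensor[measurable]:
  assumes [measurable]: "u \<in> borel_measurable lborel" "v \<in> borel_measurable lborel"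
  shows "tensor u v \<in> borel_measurable PL"
  unfolding tensor_def by measurable

lemma integrable_tensor:
  fixes f g :: "real \<Rightarrow> real"
  assumes f: "integrable lborel f" and g: "integrable lborel g"
  shows "integrable PL (\<lambda>(x, y). f x * g y)"
    and "(\<integral>p. (case p of (x, y) \<Rightarrow> f x * g y) \<partial>PL) = (\<integral>x. f x \<partial>lborel) * (\<integral>y. g y \<partial>lborel)"
proof -
  have [measurable]: "f \<in> borel_measurable lborel" "g \<in> borel_measurable lborel"
    using f g by auto
  have m: "(\<lambda>(x, y). f x * g y) \<in> borel_measurable PL" by measurable
  have "(\<integral>\<^sup>+p. ennreal (norm (case p of (x, y) \<Rightarrow> f x * g y)) \<partial>PL) =
      (\<integral>\<^sup>+x. (\<integral>\<^sup>+y. ennreal (norm (f x)) * ennreal (norm (g y)) \<partial>lborel) \<partial>lborel)"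
    by (subst lborel.nn_integral_fst[symmetric]) (auto simp: abs_mult ennreal_mult)
  also have "\<dots> = (\<integral>\<^sup>+x. ennreal (norm (f x)) \<partial>lborel) * (\<integral>\<^sup>+y. ennreal (norm (g y)) \<partial>lborel)"
    by (simp add: nn_integral_cmult nn_integral_multc)
  also have "\<dots> < \<infinity>"
    using f g unfolding integrable_iff_bounded by (simp add: ennreal_mult_less_top)
  finally show int: "integrable PL (\<lambda>(x, y). f x * g y)"
    using m by (simp add: integrable_iff_bounded)
  have "(\<integral>p. (case p of (x, y) \<Rightarrow> f x * g y) \<partial>PL) = (\<integral>x. (\<integral>y. f x * g y \<partial>lborel) \<partial>lborel)"
    using lborel_pair.integral_fst'[OF int] by simp
  also have "\<dots> = (\<integral>x. f x * (\<integral>y. g y \<partial>lborel) \<partial>lborel)" by simp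
  also have "\<dots> = (\<integral>x. f x \<partial>lborel) * (\<integral>y. g y \<partial>lborel)" by simp
  finally show "(\<integral>p. (case p of (x, y) \<Rightarrow> f x * g y) \<partial>PL) = (\<integral>x. f x \<partial>lborel) * (\<integral>y. g y \<partial>lborel)" .
qed

lemma sq_tensor:
  assumes u: "sq lborel u" and v: "sq lborel v"
  shows "sq PL (tensor u v)"
proof -
  have [measurable]: "u \<in> borel_measurable lborel" "v \<in> borel_measurable lborel"
    using u v by (auto simp: sq_def)
  have "integrable PL (\<lambda>(x, y). (u x)\<^sup>2 * (v y)\<^sup>2)"
    using u v by (intro integrable_tensor) (auto simp: sq_def)
  moreover have "(\<lambda>(x, y). (u x)\<^sup>2 * (v y)\<^sup>2) = (\<lambda>p. (tensor u v p)\<^sup>2)"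
    by (auto simp: fun_eq_iff power_mult_distrib)
  ultimately have "integrable PL (\<lambda>p. (tensor u v p)\<^sup>2)" by simp
  then show ?thesis unfolding sq_def by simp
qed

lemma ip_tensor:
  assumes u: "sq lborel u" and v: "sq lborel v" and u': "sq lborel u'" and v': "sq lborel v'"
  shows "ip PL (tensor u v) (tensor u' v') = ip lborel u u' * ip lborel v v'"
proof -
  have "ip PL (tensor u v) (tensor u' v') = (\<integral>p. (case p of (x, y) \<Rightarrow> (u x * u' x) * (v y * v' y)) \<partial>PL)"
    unfolding ip_def by (intro Bochner_Integration.integral_cong) (auto simp: mult_ac)
  also have "\<dots> = ip lborel u u' * ip lborel v v'"
    unfolding ip_def using sq_mult_integrable[OF u u'] sq_mult_integrable[OF v v']
    by (rule integrable_tensor(2))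
  finally show ?thesis .
qed

definition Hb :: "(real \<times> real \<Rightarrow> real) \<Rightarrow> (real \<Rightarrow> real) \<Rightarrow> real \<Rightarrow> real" where
  "Hb h b x = (\<integral>y. h (x, y) * b y \<partial>lborel)"

definition Ka :: "(real \<times> real \<Rightarrow> real) \<Rightarrow> (real \<Rightarrow> real) \<Rightarrow> real \<Rightarrow> real" where
  "Ka h a y = (\<integral>x. h (x, y) * a x \<partial>lborel)"

lemma ip_tensor_Hb:
  assumes h: "sq PL h" and a: "sq lborel a" and b: "sq lborel b"
  shows "ip PL h (tensor a b) = ip lborel (Hb h b) a"
proof -
  have int: "integrable PL (\<lambda>p. h p * tensor a b p)"
    by (rule sq_mult_integrable[OF h sq_tensor[OF a b]])
  moreover have "(\<lambda>p. h p * tensor a b p) = (\<lambda>(x, y). h (x, y) * (a x * b y))"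
    by (auto simp: fun_eq_iff)
  ultimately have int': "integrable PL (\<lambda>(x, y). h (x, y) * (a x * b y))" by simp
  have "ip PL h (tensor a b) = (\<integral>p. (case p of (x, y) \<Rightarrow> h (x, y) * (a x * b y)) \<partial>PL)"
    unfolding ip_def by (intro Bochner_Integration.integral_cong) auto
  also have "\<dots> = (\<integral>x. (\<integral>y. h (x, y) * (a x * b y) \<partial>lborel) \<partial>lborel)"
    using lborel_pair.integral_fst'[OF int'] by simp
  also have "\<dots> = (\<integral>x. Hb h b x * a x \<partial>lborel)"
    unfolding Hb_def by (intro Bochner_Integration.integral_cong) (auto simp: mult_ac)
  finally show ?thesis unfolding ip_def .
qed

lemma ip_tensor_Ka:
  assumes h: "sq PL h" and a: "sq lborel a" and b: "sq lborel b"
  shows "ip PL h (tensor a b) = ip lborel (Ka h a) b"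
proof -
  have int: "integrable PL (\<lambda>p. h p * tensor a b p)"
    by (rule sq_mult_integrable[OF h sq_tensor[OF a b]])
  moreover have "(\<lambda>p. h p * tensor a b p) = (\<lambda>(x, y). h (x, y) * (a x * b y))"
    by (auto simp: fun_eq_iff)
  ultimately have int': "integrable PL (\<lambda>(x, y). h (x, y) * (a x * b y))" by simp
  have "ip PL h (tensor a b) = (\<integral>p. (case p of (x, y) \<Rightarrow> h (x, y) * (a x * b y)) \<partial>PL)"
    unfolding ip_def by (intro Bochner_Integration.integral_cong) auto
  also have "\<dots> = (\<integral>y. (\<integral>x. h (x, y) * (a x * b y) \<partial>lborel) \<partial>lborel)"
    using lborel_pair.integral_snd[of "\<lambda>x y. h (x, y) * (a x * b y)"] int' by simp
  also have "\<dots> = (\<integral>y. Ka h a y * b y \<partial>lborel)"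
    unfolding Ka_def by (intro Bochner_Integration.integral_cong) (simp_all add: mult.assoc[symmetric])
  finally show ?thesis unfolding ip_def .
qed

lemma sq_Hb:
  assumes h: "sq PL h" and b: "sq lborel b"
  shows "sq lborel (Hb h b)"
proof -
  have [measurable]: "h \<in> borel_measurable PL" "b \<in> borel_measurable lborel"
    using h b by (auto simp: sq_def)
  have mH[measurable]: "Hb h b \<in> borel_measurable lborel"
    unfolding Hb_def by measurable
  have h2: "integrable PL (\<lambda>p. (h p)\<^sup>2)" using h by (simp add: sq_def)
  have AEx: "AE x in lborel. integrable lborel (\<lambda>y. (h (x, y))\<^sup>2)"
    using lborel_pair.AE_integrable_fst'[OF h2] by simp
  have intx: "integrable lborel (\<lambda>x. (\<integral>y. (h (x, y))\<^sup>2 \<partial>lborel))"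
    using lborel_pair.integrable_fst'[OF h2] by simp
  have "integrable lborel (\<lambda>x. (Hb h b x)\<^sup>2)"
  proof (rule Bochner_Integration.integrable_bound)
    show "integrable lborel (\<lambda>x. (\<integral>y. (h (x, y))\<^sup>2 \<partial>lborel) * ip lborel b b)"
      using intx by simp
    show "(\<lambda>x. (Hb h b x)\<^sup>2) \<in> borel_measurable lborel" by measurable
    show "AE x in lborel. norm ((Hb h b x)\<^sup>2) \<le> norm ((\<integral>y. (h (x, y))\<^sup>2 \<partial>lborel) * ip lborel b b)"
      using AEx
    proof eventually_elim
      case (elim x)
      have sx: "sq lborel (\<lambda>y. h (x, y))" using elim by (simp add: sq_def)
      have "(Hb h b x)\<^sup>2 = (ip lborel (\<lambda>y. h (x, y)) b)\<^sup>2" by (simp add: Hb_def ip_def)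
      also have "\<dots> \<le> ip lborel (\<lambda>y. h (x, y)) (\<lambda>y. h (x, y)) * ip lborel b b"
        by (rule cauchy_schwarz_ip[OF sx b])
      also have "\<dots> = (\<integral>y. (h (x, y))\<^sup>2 \<partial>lborel) * ip lborel b b" by (simp add: ip_self)
      finally show ?case using ip_self_nonneg[of lborel b] by (simp add: abs_mult)
    qed
  qed
  then show ?thesis using mH by (simp add: sq_def)
qed

lemma sq_Ka:
  assumes h: "sq PL h" and a: "sq lborel a"
  shows "sq lborel (Ka h a)"
proof -
  have [measurable]: "h \<in> borel_measurable PL" "a \<in> borel_measurable lborel"
    using h a by (auto simp: sq_def)
  have mK[measurable]: "Ka h a \<in> borel_measurable lborel"
  proof -
    have "(\<lambda>(y, x). h (x, y) * a x) \<in> borel_measurable PL" by measurable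
    then show ?thesis unfolding Ka_def by (rule lborel.borel_measurable_lebesgue_integral[of "\<lambda>y x. h (x, y) * a x"])
  qed
  have "(\<lambda>(x, y). (h (x, y))\<^sup>2) = (\<lambda>p. (h p)\<^sup>2)" by (auto simp: fun_eq_iff)
  then have h2: "integrable PL (\<lambda>(x, y). (h (x, y))\<^sup>2)" using h by (simp add: sq_def)
  have AEy: "AE y in lborel. integrable lborel (\<lambda>x. (h (x, y))\<^sup>2)"
    using lborel_pair.AE_integrable_snd[of "\<lambda>x y. (h (x, y))\<^sup>2"] h2 by simp
  have inty: "integrable lborel (\<lambda>y. (\<integral>x. (h (x, y))\<^sup>2 \<partial>lborel))"
    using lborel_pair.integrable_snd[of "\<lambda>x y. (h (x, y))\<^sup>2"] h2 by simp
  have "integrable lborel (\<lambda>y. (Ka h a y)\<^sup>2)"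
  proof (rule Bochner_Integration.integrable_bound)
    show "integrable lborel (\<lambda>y. (\<integral>x. (h (x, y))\<^sup>2 \<partial>lborel) * ip lborel a a)"
      using inty by simp
    show "(\<lambda>y. (Ka h a y)\<^sup>2) \<in> borel_measurable lborel" by measurable
    show "AE y in lborel. norm ((Ka h a y)\<^sup>2) \<le> norm ((\<integral>x. (h (x, y))\<^sup>2 \<partial>lborel) * ip lborel a a)"
      using AEy
    proof eventually_elim
      case (elim y)
      have sy: "sq lborel (\<lambda>x. h (x, y))" using elim by (simp add: sq_def)
      have "(Ka h a y)\<^sup>2 = (ip lborel (\<lambda>x. h (x, y)) a)\<^sup>2" by (simp add: Ka_def ip_def)
      also have "\<dots> \<le> ip lborel (\<lambda>x. h (x, y)) (\<lambda>x. h (x, y)) * ip lborel a a"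
        by (rule cauchy_schwarz_ip[OF sy a])
      also have "\<dots> = (\<integral>x. (h (x, y))\<^sup>2 \<partial>lborel) * ip lborel a a" by (simp add: ip_self)
      finally show ?case using ip_self_nonneg[of lborel a] by (simp add: abs_mult)
    qed
  qed
  then show ?thesis using mK by (simp add: sq_def)
qed

definition par :: "('i \<Rightarrow> real \<Rightarrow> real) \<Rightarrow> 'i set \<Rightarrow> bool" where
  "par e I \<longleftrightarrow> countable I \<and> ON lborel e I \<and>
     (\<forall>g. sq lborel g \<longrightarrow> (\<integral>\<^sup>+i. ennreal ((ip lborel g (e i))\<^sup>2) \<partial>count_space I) = ennreal (ip lborel g g))"

lemma sq_ip_self_eq_nn:
  assumes "sq M g"
  shows "ennreal (ip M g g) = (\<integral>\<^sup>+x. ennreal ((g x)\<^sup>2) \<partial>M)"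
  using assms unfolding ip_self sq_def by (subst nn_integral_eq_integral) auto

lemma tensor_parseval:
  assumes e: "par e I" and f: "par f J" and h: "sq PL h"
  shows "(\<integral>\<^sup>+i. (\<integral>\<^sup>+j. ennreal ((ip PL h (tensor (e i) (f j)))\<^sup>2) \<partial>count_space J) \<partial>count_space I) =
    ennreal (ip PL h h)"
proof -
  have cI: "countable I" and sqe: "\<And>i. i \<in> I \<Longrightarrow> sq lborel (e i)"
    and pe: "\<And>g. sq lborel g \<Longrightarrow> (\<integral>\<^sup>+i. ennreal ((ip lborel g (e i))\<^sup>2) \<partial>count_space I) = ennreal (ip lborel g g)"
    using e unfolding par_def ON_def by auto
  have sqf: "\<And>j. j \<in> J \<Longrightarrow> sq lborel (f j)"
    and pf: "\<And>g. sq lborel g \<Longrightarrow> (\<integral>\<^sup>+j. ennreal ((ip lborel g (f j))\<^sup>2) \<partial>count_space J) = ennreal (ip lborel g g)"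
    using f unfolding par_def ON_def by auto
  have [measurable]: "h \<in> borel_measurable PL" using h by (simp add: sq_def)
  have inner: "(\<integral>\<^sup>+j. ennreal ((ip PL h (tensor (e i) (f j)))\<^sup>2) \<partial>count_space J) =
      (\<integral>\<^sup>+y. ennreal ((Ka h (e i) y)\<^sup>2) \<partial>lborel)" if i: "i \<in> I" for i
  proof -
    have "(\<integral>\<^sup>+j. ennreal ((ip PL h (tensor (e i) (f j)))\<^sup>2) \<partial>count_space J) =
        (\<integral>\<^sup>+j. ennreal ((ip lborel (Ka h (e i)) (f j))\<^sup>2) \<partial>count_space J)"
      by (intro nn_integral_cong) (simp add: ip_tensor_Ka[OF h sqe[OF i] sqf])
    also have "\<dots> = ennreal (ip lborel (Ka h (e i)) (Ka h (e i)))"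
      by (rule pf[OF sq_Ka[OF h sqe[OF i]]])
    also have "\<dots> = (\<integral>\<^sup>+y. ennreal ((Ka h (e i) y)\<^sup>2) \<partial>lborel)"
      by (rule sq_ip_self_eq_nn[OF sq_Ka[OF h sqe[OF i]]])
    finally show ?thesis .
  qed
  have "(\<integral>\<^sup>+i. (\<integral>\<^sup>+j. ennreal ((ip PL h (tensor (e i) (f j)))\<^sup>2) \<partial>count_space J) \<partial>count_space I) =
      (\<integral>\<^sup>+i. (\<integral>\<^sup>+y. ennreal ((Ka h (e i) y)\<^sup>2) \<partial>lborel) \<partial>count_space I)"
    by (intro nn_integral_cong) (simp add: inner)
  also have "\<dots> = (\<integral>\<^sup>+y. (\<integral>\<^sup>+i. ennreal ((Ka h (e i) y)\<^sup>2) \<partial>count_space I) \<partial>lborel)"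
  proof (rule nn_integral_count_space_nn_integral[symmetric, OF cI])
    fix i assume "i \<in> I"
    then have "Ka h (e i) \<in> borel_measurable lborel" using sq_Ka[OF h sqe] by (simp add: sq_def)
    then show "(\<lambda>y. ennreal ((Ka h (e i) y)\<^sup>2)) \<in> borel_measurable lborel" by measurable
  qed
  also have "\<dots> = (\<integral>\<^sup>+y. (\<integral>\<^sup>+x. ennreal ((h (x, y))\<^sup>2) \<partial>lborel) \<partial>lborel)"
  proof (rule nn_integral_cong_AE)
    have "(\<lambda>(x, y). (h (x, y))\<^sup>2) = (\<lambda>p. (h p)\<^sup>2)" by (auto simp: fun_eq_iff)
    then have h2: "integrable PL (\<lambda>(x, y). (h (x, y))\<^sup>2)" using h by (simp add: sq_def)
    have AEy: "AE y in lborel. integrable lborel (\<lambda>x. (h (x, y))\<^sup>2)"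
      using lborel_pair.AE_integrable_snd[of "\<lambda>x y. (h (x, y))\<^sup>2"] h2 by simp
    then show "AE y in lborel. (\<integral>\<^sup>+i. ennreal ((Ka h (e i) y)\<^sup>2) \<partial>count_space I) =
        (\<integral>\<^sup>+x. ennreal ((h (x, y))\<^sup>2) \<partial>lborel)"
    proof eventually_elim
      case (elim y)
      have sy: "sq lborel (\<lambda>x. h (x, y))" using elim by (simp add: sq_def)
      have "(\<integral>\<^sup>+i. ennreal ((Ka h (e i) y)\<^sup>2) \<partial>count_space I) =
          (\<integral>\<^sup>+i. ennreal ((ip lborel (\<lambda>x. h (x, y)) (e i))\<^sup>2) \<partial>count_space I)"
        by (simp add: Ka_def ip_def)
      also have "\<dots> = ennreal (ip lborel (\<lambda>x. h (x, y)) (\<lambda>x. h (x, y)))" by (rule pe[OF sy])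
      also have "\<dots> = (\<integral>\<^sup>+x. ennreal ((h (x, y))\<^sup>2) \<partial>lborel)" by (rule sq_ip_self_eq_nn[OF sy])
      finally show ?case .
    qed
  qed
  also have "\<dots> = (\<integral>\<^sup>+p. ennreal ((h p)\<^sup>2) \<partial>PL)"
    by (rule lborel_pair.nn_integral_snd[of "\<lambda>p. ennreal ((h p)\<^sup>2)", simplified]) measurable
  also have "\<dots> = ennreal (ip PL h h)"
    by (rule sq_ip_self_eq_nn[OF h, symmetric])
  finally show ?thesis .
qed

lemma comp_meas[measurable]: "f \<in> borel_measurable M \<Longrightarrow> (\<lambda>x. (f x :: real^2) $ i) \<in> borel_measurable M"
proof -
  assume [measurable]: "f \<in> borel_measurable M"
  have "(\<lambda>x. f x $ i) = (\<lambda>x. f x \<bullet> axis i 1)" by (simp add: inner_axis)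
  then show ?thesis by simp
qed

lemma vec2_axis: "vec2 a b = a *\<^sub>R axis 1 1 + b *\<^sub>R axis 2 1"
  unfolding vec2_def by (auto simp: vec_eq_iff axis_def forall_2)

lemma vec2_meas: "f \<in> borel_measurable M \<Longrightarrow> g \<in> borel_measurable M \<Longrightarrow> (\<lambda>x. vec2 (f x) (g x)) \<in> borel_measurable M"
  unfolding vec2_axis by (intro borel_measurable_add borel_measurable_scaleR) auto

lemma vec2_nth[simp]: "vec2 a b $ 1 = a" "vec2 a b $ 2 = b"
  by (auto simp: vec2_def)

lemma vec2_eta: "vec2 (v $ 1) (v $ 2) = (v::real^2)"
  by (auto simp: vec_eq_iff forall_2)

lemma norm2_vec: "(norm (v::real^2))\<^sup>2 = (v $ 1)\<^sup>2 + (v $ 2)\<^sup>2"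
  unfolding norm_vec_def L2_set_def by (simp add: sum_2 sum_nonneg)

lemma L2_D:
  assumes "f \<in> L2"
  shows "sq lborel (\<lambda>x. f x $ i)"
proof -
  have m[measurable]: "f \<in> borel_measurable lborel" and int: "integrable lborel (\<lambda>x. (norm (f x))\<^sup>2)"
    using assms by (auto simp: L2_def)
  have "integrable lborel (\<lambda>x. (f x $ i)\<^sup>2)"
  proof (rule Bochner_Integration.integrable_bound[OF int])
    show "(\<lambda>x. (f x $ i)\<^sup>2) \<in> borel_measurable lborel" by measurable
    show "AE x in lborel. norm ((f x $ i)\<^sup>2) \<le> norm ((norm (f x))\<^sup>2)"
    proof (rule AE_I2)
      fix x
      have "(f x $ i)\<^sup>2 \<le> (f x $ 1)\<^sup>2 + (f x $ 2)\<^sup>2"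
        using exhaust_2[of i] by auto
      then show "norm ((f x $ i)\<^sup>2) \<le> norm ((norm (f x))\<^sup>2)" by (simp add: norm2_vec)
    qed
  qed
  then show ?thesis by (simp add: sq_def)
qed

lemma L2_I:
  assumes s1: "sq lborel (\<lambda>x. f x $ 1)" and s2: "sq lborel (\<lambda>x. f x $ 2)"
  shows "f \<in> L2"
proof -
  have "(\<lambda>x. vec2 (f x $ 1) (f x $ 2)) \<in> borel_measurable lborel"
    using s1 s2 by (intro vec2_meas) (auto simp: sq_def)
  then have m: "f \<in> borel_measurable lborel" by (simp add: vec2_eta)
  have "integrable lborel (\<lambda>x. (f x $ 1)\<^sup>2 + (f x $ 2)\<^sup>2)"
    using s1 s2 by (auto simp: sq_def)
  then show ?thesis using m by (simp add: L2_def norm2_vec)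
qed

lemma L2_norm_sq:
  assumes "f \<in> L2"
  shows "(L2_norm f)\<^sup>2 = ip lborel (\<lambda>x. f x $ 1) (\<lambda>x. f x $ 1) + ip lborel (\<lambda>x. f x $ 2) (\<lambda>x. f x $ 2)"
proof -
  have s1: "sq lborel (\<lambda>x. f x $ 1)" and s2: "sq lborel (\<lambda>x. f x $ 2)" using L2_D[OF assms] by auto
  have "(LINT x|lborel. (norm (f x))\<^sup>2) = (LINT x|lborel. (f x $ 1)\<^sup>2 + (f x $ 2)\<^sup>2)"
    by (simp add: norm2_vec)
  also have "\<dots> = ip lborel (\<lambda>x. f x $ 1) (\<lambda>x. f x $ 1) + ip lborel (\<lambda>x. f x $ 2) (\<lambda>x. f x $ 2)"
    using s1 s2 by (simp add: ip_self sq_def)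
  finally have eq: "(LINT x|lborel. (norm (f x))\<^sup>2) = \<dots>" .
  have "0 \<le> (LINT x|lborel. (norm (f x))\<^sup>2)" by simp
  then show ?thesis unfolding L2_norm_def using eq by simp
qed

lemma star_prod_nth: "star_prod f g $ i $ j = ip lborel (\<lambda>x. f x $ i) (\<lambda>x. g x $ j)"
  by (simp add: star_prod_def ip_def)

definition cmp :: "bool \<Rightarrow> 2" where "cmp a = (if a then 1 else 2)"

lemma comp_eq_iff[simp]: "cmp a = cmp b \<longleftrightarrow> a = b"
  by (auto simp: cmp_def)

lemma sum_2_comp: "(\<Sum>j\<in>(UNIV::2 set). h j) = (\<Sum>a\<in>UNIV. h (cmp a))"
  by (simp add: sum_2 UNIV_bool cmp_def add.commute)

lemma csum_bessel_le:
  assumes "countable I" "ON M e I" "sq M g"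
  shows "(\<integral>\<^sup>+i. ennreal ((ip M g (e i))\<^sup>2) \<partial>count_space I) \<le> ennreal (ip M g g)"
proof (rule csum_le_bound[OF assms(1)])
  fix F assume F: "finite F" "F \<subseteq> I"
  have "(\<Sum>i\<in>F. ennreal ((ip M g (e i))\<^sup>2)) = ennreal (\<Sum>i\<in>F. (ip M g (e i))\<^sup>2)"
    by (rule sum_ennreal) simp
  also have "\<dots> \<le> ennreal (ip M g g)"
    by (rule ennreal_leI, rule bessel[OF assms(2) F assms(3)])
  finally show "(\<Sum>i\<in>F. ennreal ((ip M g (e i))\<^sup>2)) \<le> ennreal (ip M g g)" .
qed

lemma parseval_from_approx:
  assumes I: "countable I" and on: "ON M e I" and g: "sq M g"
    and approx: "\<And>\<epsilon>. \<epsilon> > 0 \<Longrightarrow> \<exists>F. finite F \<and> F \<subseteq> I \<and> ip M g g - \<epsilon> < (\<Sum>i\<in>F. (ip M g (e i))\<^sup>2)"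
  shows "(\<integral>\<^sup>+i. ennreal ((ip M g (e i))\<^sup>2) \<partial>count_space I) = ennreal (ip M g g)"
proof (rule antisym)
  show "(\<integral>\<^sup>+i. ennreal ((ip M g (e i))\<^sup>2) \<partial>count_space I) \<le> ennreal (ip M g g)"
    by (rule csum_bessel_le[OF I on g])
  show "ennreal (ip M g g) \<le> (\<integral>\<^sup>+i. ennreal ((ip M g (e i))\<^sup>2) \<partial>count_space I)"
  proof (rule ennreal_le_epsilon)
    fix \<epsilon> :: real assume "0 < \<epsilon>"
    then obtain F where F: "finite F" "F \<subseteq> I" and lt: "ip M g g - \<epsilon> < (\<Sum>i\<in>F. (ip M g (e i))\<^sup>2)"
      using approx by blast
    have "ennreal (ip M g g) \<le> ennreal ((\<Sum>i\<in>F. (ip M g (e i))\<^sup>2) + \<epsilon>)"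
      using lt by (intro ennreal_leI) simp
    also have "\<dots> = (\<Sum>i\<in>F. ennreal ((ip M g (e i))\<^sup>2)) + ennreal \<epsilon>"
      using \<open>0 < \<epsilon>\<close> by (simp add: ennreal_plus sum_nonneg sum_ennreal)
    also have "\<dots> \<le> (\<integral>\<^sup>+i. ennreal ((ip M g (e i))\<^sup>2) \<partial>count_space I) + ennreal \<epsilon>"
      by (intro add_mono csum_finite_le F order.refl)
    finally show "ennreal (ip M g g) \<le> (\<integral>\<^sup>+i. ennreal ((ip M g (e i))\<^sup>2) \<partial>count_space I) + ennreal \<epsilon>" .
  qed
qed

definition dl :: "(real \<Rightarrow> real^2) \<Rightarrow> nat \<Rightarrow> int \<Rightarrow> bool \<Rightarrow> real \<Rightarrow> real" where
  "dl u j k a x = sqrt 2 ^ j * (u (2 ^ j * x - of_int k) $ cmp a)"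

fun e1 :: "(real \<Rightarrow> real^2) \<Rightarrow> (real \<Rightarrow> real^2) \<Rightarrow> (int + nat \<times> int) \<times> bool \<Rightarrow> real \<Rightarrow> real" where
  "e1 \<phi> \<psi> (Inl k, a) = dl \<phi> 0 k a"
| "e1 \<phi> \<psi> (Inr (j, k), a) = dl \<psi> j k a"

lemma e1_ws: "e1 \<phi> \<psi> (w, a) = (\<lambda>x. wavelet_system \<phi> \<psi> w x $ cmp a)"
  by (cases w) (auto simp: dl_def wavelet_system_def fun_eq_iff)

lemma e1_ws': "e1 \<phi> \<psi> p x = wavelet_system \<phi> \<psi> (fst p) x $ cmp (snd p)"
  using e1_ws[of \<phi> \<psi> "fst p" "snd p"] by (simp add: fun_eq_iff)

lemma mat1_nth: "(mat 1 :: real^2^2) $ i $ j = (if i = j then 1 else 0)"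
  by (simp add: mat_def)

lemma e1_par:
  assumes ob: "orthonormal_basis L2 (wavelet_system \<phi> \<psi>) UNIV"
  shows "par (e1 \<phi> \<psi>) UNIV"
proof -
  let ?W = "wavelet_system \<phi> \<psi>"
  let ?e = "e1 \<phi> \<psi>"
  have WL2: "\<And>w. ?W w \<in> L2" and onf: "orthonormal_family ?W UNIV"
    and ex: "\<And>f. f \<in> L2 \<Longrightarrow> \<exists>Q. L2_expansion f Q ?W UNIV"
    using ob unfolding orthonormal_basis_def basis_of_def by auto
  have sqe: "sq lborel (?e p)" for p
    using L2_D[OF WL2] by (cases p) (simp only: e1_ws)
  have ON: "ON lborel ?e UNIV"
    unfolding ON_def
  proof (intro conjI ballI)
    fix p q :: "(int + nat \<times> int) \<times> bool"
    obtain w a where p: "p = (w, a)" by (cases p)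
    obtain w' b where q: "q = (w', b)" by (cases q)
    have "ip lborel (?e p) (?e q) = star_prod (?W w) (?W w') $ cmp a $ cmp b"
      unfolding p q e1_ws star_prod_nth ..
    also have "\<dots> = (if p = q then 1 else 0)"
      using onf unfolding orthonormal_family_def p q by (auto simp: mat1_nth)
    finally show "ip lborel (?e p) (?e q) = (if p = q then 1 else 0)" .
  qed (rule sqe)
  have "(\<integral>\<^sup>+i. ennreal ((ip lborel g (?e i))\<^sup>2) \<partial>count_space UNIV) = ennreal (ip lborel g g)"
    if g: "sq lborel g" for g
  proof (rule parseval_from_approx[OF _ ON g])
    show "countable (UNIV :: ((int + nat \<times> int) \<times> bool) set)" by simp
    fix \<epsilon> :: real assume "\<epsilon> > 0"
    define f where "f = (\<lambda>x. vec2 (g x) 0)"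
    have fL2: "f \<in> L2" using g by (intro L2_I) (simp_all add: f_def)
    then obtain Q where Q: "L2_expansion f Q ?W UNIV" using ex by blast
    have "sqrt \<epsilon> > 0" using \<open>\<epsilon> > 0\<close> by simp
    with Q obtain F0 where F0: "finite F0"
      and F0lt: "\<And>F. finite F \<and> F0 \<subseteq> F \<and> F \<subseteq> UNIV \<Longrightarrow> L2_norm (\<lambda>x. f x - (\<Sum>k\<in>F. Q k *v ?W k x)) < sqrt \<epsilon>"
      unfolding L2_expansion_def by blast
    define F where "F = F0"
    have F: "finite F" using F0 by (simp add: F_def)
    have lt: "L2_norm (\<lambda>x. f x - (\<Sum>k\<in>F. Q k *v ?W k x)) < sqrt \<epsilon>"
      using F0lt[of F0] F0 by (simp add: F_def)
    define S where "S = (\<lambda>x. (\<Sum>k\<in>F. Q k *v ?W k x))"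
    have Sc: "S x $ i = (\<Sum>p\<in>F \<times> UNIV. Q (fst p) $ i $ cmp (snd p) * ?e p x)" for x i
    proof -
      have "S x $ i = (\<Sum>k\<in>F. \<Sum>a\<in>UNIV. Q k $ i $ cmp a * ?W k x $ cmp a)"
        unfolding S_def by (simp add: sum_component matrix_vector_mult_def sum_2_comp)
      also have "\<dots> = (\<Sum>p\<in>F \<times> UNIV. Q (fst p) $ i $ cmp (snd p) * ?e p x)"
        by (simp add: sum.cartesian_product e1_ws' case_prod_beta)
      finally show ?thesis .
    qed
    have sqS: "sq lborel (\<lambda>x. S x $ i)" for i
      unfolding Sc using F by (intro sq_sum sq_cmult sqe) auto
    have DL2: "(\<lambda>x. f x - S x) \<in> L2"
      using g sqS by (intro L2_I) (auto simp: f_def intro!: sq_diff sq_uminus)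
    have "ip lborel g g - (\<Sum>p\<in>F \<times> UNIV. (ip lborel g (?e p))\<^sup>2) \<le>
        ip lborel (\<lambda>x. g x - (\<Sum>p\<in>F \<times> UNIV. Q (fst p) $ 1 $ cmp (snd p) * ?e p x))
                  (\<lambda>x. g x - (\<Sum>p\<in>F \<times> UNIV. Q (fst p) $ 1 $ cmp (snd p) * ?e p x))"
      by (rule bessel_lower[OF ON _ _ g]) (use F in auto)
    also have "\<dots> = ip lborel (\<lambda>x. (f x - S x) $ 1) (\<lambda>x. (f x - S x) $ 1)"
      by (simp add: f_def Sc)
    also have "\<dots> \<le> (L2_norm (\<lambda>x. f x - S x))\<^sup>2"
      unfolding L2_norm_sq[OF DL2] using ip_self_nonneg[of lborel "\<lambda>x. (f x - S x) $ 2"] by simp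
    also have "\<dots> < \<epsilon>"
    proof -
      have "0 \<le> L2_norm (\<lambda>x. f x - S x)" by (simp add: L2_norm_def)
      then have "(L2_norm (\<lambda>x. f x - S x))\<^sup>2 < (sqrt \<epsilon>)\<^sup>2"
        using lt unfolding S_def by (intro power_strict_mono) auto
      then show ?thesis using \<open>\<epsilon> > 0\<close> by simp
    qed
    finally show "\<exists>F. finite F \<and> F \<subseteq> UNIV \<and> ip lborel g g - \<epsilon> < (\<Sum>i\<in>F. (ip lborel g (?e i))\<^sup>2)"
      using F by (intro exI[of _ "F \<times> UNIV"]) auto
  qed
  then show ?thesis using ON unfolding par_def by simp
qed

lemma sqrt2_pow_sq: "sqrt 2 ^ j * sqrt 2 ^ j = (2::real) ^ j"
  by (simp add: power_mult_distrib[symmetric])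

lemma sqrt2_pow_pos: "sqrt 2 ^ j > (0::real)"
  by simp

lemma aff_integral:
  fixes F :: "real \<Rightarrow> real"
  shows "(\<integral>x. F x \<partial>lborel) = (\<integral>x. F (x / 2 ^ j) / 2 ^ j \<partial>lborel)"
proof -
  have "(\<integral>x. F x \<partial>lborel) = \<bar>1 / 2 ^ j\<bar> *\<^sub>R (\<integral>x. F (0 + (1 / 2 ^ j) * x) \<partial>lborel)"
    by (rule lborel_integral_real_affine) simp
  also have "\<dots> = (\<integral>x. F (x / 2 ^ j) / 2 ^ j \<partial>lborel)"
    by (simp add: divide_inverse mult.commute)
  finally show ?thesis .
qed

lemma sq_affine:
  fixes g :: "real \<Rightarrow> real" and c t r :: real
  assumes g: "sq lborel g" and c: "c \<noteq> 0"
  shows "sq lborel (\<lambda>x. r * g (t + c * x))"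
proof -
  have [measurable]: "g \<in> borel_measurable lborel" using g by (simp add: sq_def)
  have "integrable lborel (\<lambda>x. (g (t + c * x))\<^sup>2)"
    using lborel_integrable_real_affine[OF sq_int[OF g] c, of t] by simp
  then have "integrable lborel (\<lambda>x. r\<^sup>2 * (g (t + c * x))\<^sup>2)" by simp
  then show ?thesis unfolding sq_def by (simp add: power_mult_distrib)
qed

definition shrink :: "nat \<Rightarrow> (real \<Rightarrow> real) \<Rightarrow> real \<Rightarrow> real" where
  "shrink j g t = g (t / 2 ^ j) / sqrt 2 ^ j"

lemma sq_shrink: "sq lborel g \<Longrightarrow> sq lborel (shrink j g)"
proof -
  assume g: "sq lborel g"
  have "sq lborel (\<lambda>x. (1 / sqrt 2 ^ j) * g (0 + (1 / 2 ^ j) * x))"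
    by (rule sq_affine[OF g]) simp
  moreover have "(\<lambda>x. (1 / sqrt 2 ^ j) * g (0 + (1 / 2 ^ j) * x)) = shrink j g"
    by (auto simp: fun_eq_iff shrink_def)
  ultimately show ?thesis by simp
qed

lemma dil_ip:
  "ip lborel g (dl v (j + d) k b) = ip lborel (shrink j g) (dl v d k b)"
proof -
  have "ip lborel g (dl v (j + d) k b) = (\<integral>x. g (x / 2 ^ j) * dl v (j + d) k b (x / 2 ^ j) / 2 ^ j \<partial>lborel)"
    unfolding ip_def by (rule aff_integral)
  also have "\<dots> = ip lborel (shrink j g) (dl v d k b)"
    unfolding ip_def
  proof (intro Bochner_Integration.integral_cong refl)
    fix x :: real
    have e1: "(2::real) ^ (j + d) * (x / 2 ^ j) = 2 ^ d * x" by (simp add: power_add)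
    have e2: "sqrt 2 ^ (j + d) / (2::real) ^ j = sqrt 2 ^ d / sqrt 2 ^ j"
    proof -
      have "sqrt 2 ^ (j + d) / (2::real) ^ j = (sqrt 2 ^ j * sqrt 2 ^ d) / (sqrt 2 ^ j * sqrt 2 ^ j)"
        by (simp only: power_add sqrt2_pow_sq)
      also have "\<dots> = sqrt 2 ^ d / sqrt 2 ^ j"
        using sqrt2_pow_pos[of j] by simp
      finally show ?thesis .
    qed
    show "g (x / 2 ^ j) * dl v (j + d) k b (x / 2 ^ j) / 2 ^ j = shrink j g x * dl v d k b x"
    proof -
      have "g (x / 2 ^ j) * dl v (j + d) k b (x / 2 ^ j) / 2 ^ j =
          g (x / 2 ^ j) * (v (2 ^ d * x - of_int k) $ cmp b) * (sqrt 2 ^ (j + d) / 2 ^ j)"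
        unfolding dl_def e1 by simp
      also have "\<dots> = shrink j g x * dl v d k b x"
        unfolding e2 dl_def shrink_def by simp
      finally show ?thesis .
    qed
  qed
  finally show ?thesis .
qed

lemma ip_shrink_self: "ip lborel (shrink j g) (shrink j g) = ip lborel g g"
proof -
  have "ip lborel g g = (\<integral>x. g (x / 2 ^ j) * g (x / 2 ^ j) / 2 ^ j \<partial>lborel)"
    unfolding ip_def by (rule aff_integral)
  also have "\<dots> = ip lborel (shrink j g) (shrink j g)"
    unfolding ip_def shrink_def
  proof (intro Bochner_Integration.integral_cong refl)
    fix x :: real
    have "g (x / 2 ^ j) / sqrt 2 ^ j * (g (x / 2 ^ j) / sqrt 2 ^ j) = g (x / 2 ^ j) * g (x / 2 ^ j) / (sqrt 2 ^ j * sqrt 2 ^ j)"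
      by simp
    then show "g (x / 2 ^ j) * g (x / 2 ^ j) / 2 ^ j = g (x / 2 ^ j) / sqrt 2 ^ j * (g (x / 2 ^ j) / sqrt 2 ^ j)"
      by (simp only: sqrt2_pow_sq)
  qed
  finally show ?thesis by simp
qed

lemma shrink_dl: "shrink j (dl u j k a) = dl u 0 k a"
  by (auto simp: fun_eq_iff shrink_def dl_def)

lemma dl_affine: "dl u j k a = (\<lambda>x. sqrt 2 ^ j * dl u 0 0 a (- of_int k + 2 ^ j * x))"
  by (auto simp: fun_eq_iff dl_def)

context
  fixes \<phi> \<psi> :: "real \<Rightarrow> real^2"
  assumes P: "par (e1 \<phi> \<psi>) UNIV"
begin

lemma e1_ON: "ip lborel (e1 \<phi> \<psi> p) (e1 \<phi> \<psi> q) = (if p = q then 1 else 0)"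
  using P unfolding par_def ON_def by blast

lemma e1_sq: "sq lborel (e1 \<phi> \<psi> p)"
  using P unfolding par_def ON_def by blast

lemma sq_dl_phi: "sq lborel (dl \<phi> j k a)"
proof -
  have "sq lborel (dl \<phi> 0 0 a)" using e1_sq[of "(Inl 0, a)"] by simp
  then show ?thesis unfolding dl_affine[of \<phi> j] by (rule sq_affine) simp
qed

lemma sq_dl_psi: "sq lborel (dl \<psi> j k a)"
  using e1_sq[of "(Inr (j, k), a)"] by simp

lemma ip_phi_phi: "ip lborel (dl \<phi> j k a) (dl \<phi> j k' b) = (if k = k' \<and> a = b then 1 else 0)"
proof -
  have "ip lborel (dl \<phi> j k a) (dl \<phi> (j + 0) k' b) = ip lborel (dl \<phi> 0 k a) (dl \<phi> 0 k' b)"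
    unfolding dil_ip shrink_dl ..
  also have "\<dots> = (if k = k' \<and> a = b then 1 else 0)"
    using e1_ON[of "(Inl k, a)" "(Inl k', b)"] by simp
  finally show ?thesis by simp
qed

lemma ip_psi_psi: "ip lborel (dl \<psi> i k a) (dl \<psi> i' k' b) = (if i = i' \<and> k = k' \<and> a = b then 1 else 0)"
  using e1_ON[of "(Inr (i, k), a)" "(Inr (i', k'), b)"] by simp

lemma ip_phi_psi: "j \<le> i \<Longrightarrow> ip lborel (dl \<phi> j k a) (dl \<psi> i k' b) = 0"
proof -
  assume "j \<le> i"
  then obtain d where i: "i = j + d" using le_Suc_ex by blast
  have "ip lborel (dl \<phi> j k a) (dl \<psi> (j + d) k' b) = ip lborel (dl \<phi> 0 k a) (dl \<psi> d k' b)"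
    unfolding dil_ip shrink_dl ..
  also have "\<dots> = 0"
    using e1_ON[of "(Inl k, a)" "(Inr (d, k'), b)"] by simp
  finally show ?thesis using i by simp
qed

definition Aphi :: "(real \<Rightarrow> real) \<Rightarrow> nat \<Rightarrow> ennreal" where
  "Aphi g j = (\<integral>\<^sup>+p. ennreal ((ip lborel g (dl \<phi> j (fst p) (snd p)))\<^sup>2) \<partial>count_space UNIV)"

definition Apsi :: "(real \<Rightarrow> real) \<Rightarrow> nat \<Rightarrow> ennreal" where
  "Apsi g j = (\<integral>\<^sup>+p. ennreal ((ip lborel g (dl \<psi> j (fst p) (snd p)))\<^sup>2) \<partial>count_space UNIV)"

lemma P1: "sq lborel g \<Longrightarrow> ennreal (ip lborel g g) = Aphi g 0 + (\<integral>\<^sup>+i. Apsi g i \<partial>count_space UNIV)"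
proof -
  assume g: "sq lborel g"
  let ?c = "\<lambda>p. ennreal ((ip lborel g (e1 \<phi> \<psi> p))\<^sup>2)"
  have "ennreal (ip lborel g g) = (\<integral>\<^sup>+p. ?c p \<partial>count_space UNIV)"
    using P g unfolding par_def by simp
  also have "\<dots> = (\<integral>\<^sup>+w. (\<integral>\<^sup>+a. ?c (w, a) \<partial>count_space UNIV) \<partial>count_space UNIV)"
    by (rule csum_prod)
  also have "\<dots> = (\<integral>\<^sup>+k. (\<integral>\<^sup>+a. ?c (Inl k, a) \<partial>count_space UNIV) \<partial>count_space UNIV) +
      (\<integral>\<^sup>+ik. (\<integral>\<^sup>+a. ?c (Inr ik, a) \<partial>count_space UNIV) \<partial>count_space UNIV)"
    by (rule csum_sum_type)
  also have "(\<integral>\<^sup>+k. (\<integral>\<^sup>+a. ?c (Inl k, a) \<partial>count_space UNIV) \<partial>count_space UNIV) = Aphi g 0"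
    unfolding Aphi_def by (subst csum_prod) simp
  also have "(\<integral>\<^sup>+ik. (\<integral>\<^sup>+a. ?c (Inr ik, a) \<partial>count_space UNIV) \<partial>count_space UNIV) =
      (\<integral>\<^sup>+i. (\<integral>\<^sup>+k. (\<integral>\<^sup>+a. ?c (Inr (i, k), a) \<partial>count_space UNIV) \<partial>count_space UNIV) \<partial>count_space UNIV)"
    by (rule csum_prod[where f = "\<lambda>ik. (\<integral>\<^sup>+a. ?c (Inr ik, a) \<partial>count_space UNIV)"])
  also have "\<dots> = (\<integral>\<^sup>+i. Apsi g i \<partial>count_space UNIV)"
    unfolding Apsi_def by (intro nn_integral_cong) (subst csum_prod, simp)
  finally show ?thesis .
qed

lemma csum_nat_shift:
  fixes f :: "nat \<Rightarrow> ennreal"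
  shows "(\<integral>\<^sup>+i. f i \<partial>count_space UNIV) = (\<Sum>i<j. f i) + (\<integral>\<^sup>+i. f (i + j) \<partial>count_space UNIV)"
proof -
  have "(\<integral>\<^sup>+i. f i \<partial>count_space UNIV) =
      (\<integral>\<^sup>+i. f i * indicator {..<j} i + f i * indicator {j..} i \<partial>count_space UNIV)"
    by (intro nn_integral_cong) (auto split: split_indicator)
  also have "\<dots> = (\<integral>\<^sup>+i. f i * indicator {..<j} i \<partial>count_space UNIV) +
      (\<integral>\<^sup>+i. f i * indicator {j..} i \<partial>count_space UNIV)"
    by (rule csum_add)
  also have "(\<integral>\<^sup>+i. f i * indicator {..<j} i \<partial>count_space UNIV) = (\<Sum>i<j. f i)"
    by (subst nn_integral_count_space'[of "{..<j}"]) (auto split: split_indicator intro!: sum.cong)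
  also have "(\<integral>\<^sup>+i. f i * indicator {j..} i \<partial>count_space UNIV) = (\<integral>\<^sup>+i. f i \<partial>count_space {j..})"
    by (simp add: nn_integral_restrict_space[symmetric] restrict_count_space)
  also have "\<dots> = (\<integral>\<^sup>+i. f (i + j) \<partial>count_space UNIV)"
  proof (rule nn_integral_bij_count_space[symmetric])
    show "bij_betw (\<lambda>i. i + j) UNIV {j..}"
      by (rule bij_betw_byWitness[where f' = "\<lambda>i. i - j"]) auto
  qed
  finally show ?thesis .
qed

lemma level_identity:
  assumes g: "sq lborel g"
  shows "Aphi g j = Aphi g 0 + (\<Sum>i<j. Apsi g i)"
proof -
  have sg: "sq lborel (shrink j g)" by (rule sq_shrink[OF g])
  have phi: "Aphi (shrink j g) 0 = Aphi g j"
    unfolding Aphi_def using dil_ip[of g \<phi> j 0] by simp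
  have psi: "Apsi (shrink j g) i = Apsi g (i + j)" for i
    unfolding Apsi_def using dil_ip[of g \<psi> j i] by (simp add: add.commute)
  have A: "ennreal (ip lborel g g) = Aphi g j + (\<integral>\<^sup>+i. Apsi g (i + j) \<partial>count_space UNIV)"
    using P1[OF sg] unfolding ip_shrink_self phi psi .
  have B: "ennreal (ip lborel g g) = Aphi g 0 + (\<Sum>i<j. Apsi g i) + (\<integral>\<^sup>+i. Apsi g (i + j) \<partial>count_space UNIV)"
    using P1[OF g] csum_nat_shift[of "Apsi g" j] by (simp add: add.assoc)
  have fin: "(\<integral>\<^sup>+i. Apsi g (i + j) \<partial>count_space UNIV) \<noteq> \<infinity>"
  proof -
    have "(\<integral>\<^sup>+i. Apsi g (i + j) \<partial>count_space UNIV) \<le> ennreal (ip lborel g g)"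
      using A by (metis le_iff_add add.commute)
    then show ?thesis using ennreal_less_top[of "ip lborel g g"] by (auto simp: top_unique)
  qed
  from A B have "(\<integral>\<^sup>+i. Apsi g (i + j) \<partial>count_space UNIV) + Aphi g j =
      (\<integral>\<^sup>+i. Apsi g (i + j) \<partial>count_space UNIV) + (Aphi g 0 + (\<Sum>i<j. Apsi g i))"
    by (metis add.commute)
  then have "(\<integral>\<^sup>+i. Apsi g (i + j) \<partial>count_space UNIV) = \<infinity> \<or> Aphi g j = Aphi g 0 + (\<Sum>i<j. Apsi g i)"
    by (simp only: ennreal_add_left_cancel)
  then show ?thesis using fin by blast
qed

end

lemma csum_e1_split:
  fixes F :: "(int + nat \<times> int) \<times> bool \<Rightarrow> ennreal"
  shows "(\<integral>\<^sup>+w. F w \<partial>count_space UNIV) =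
    (\<integral>\<^sup>+q. F (Inl (fst q), snd q) \<partial>count_space UNIV) +
    (\<integral>\<^sup>+i. (\<integral>\<^sup>+q. F (Inr (i, fst q), snd q) \<partial>count_space UNIV) \<partial>count_space UNIV)"
proof -
  have "(\<integral>\<^sup>+w. F w \<partial>count_space UNIV) = (\<integral>\<^sup>+w. (\<integral>\<^sup>+a. F (w, a) \<partial>count_space UNIV) \<partial>count_space UNIV)"
    by (rule csum_prod)
  also have "\<dots> = (\<integral>\<^sup>+k. (\<integral>\<^sup>+a. F (Inl k, a) \<partial>count_space UNIV) \<partial>count_space UNIV) +
      (\<integral>\<^sup>+ik. (\<integral>\<^sup>+a. F (Inr ik, a) \<partial>count_space UNIV) \<partial>count_space UNIV)"
    by (rule csum_sum_type)
  also have "(\<integral>\<^sup>+k. (\<integral>\<^sup>+a. F (Inl k, a) \<partial>count_space UNIV) \<partial>count_space UNIV) =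
      (\<integral>\<^sup>+q. F (Inl (fst q), snd q) \<partial>count_space UNIV)"
    by (subst csum_prod) simp
  also have "(\<integral>\<^sup>+ik. (\<integral>\<^sup>+a. F (Inr ik, a) \<partial>count_space UNIV) \<partial>count_space UNIV) =
      (\<integral>\<^sup>+i. (\<integral>\<^sup>+k. (\<integral>\<^sup>+a. F (Inr (i, k), a) \<partial>count_space UNIV) \<partial>count_space UNIV) \<partial>count_space UNIV)"
    by (rule csum_prod[where f = "\<lambda>ik. (\<integral>\<^sup>+a. F (Inr ik, a) \<partial>count_space UNIV)"])
  also have "\<dots> = (\<integral>\<^sup>+i. (\<integral>\<^sup>+q. F (Inr (i, fst q), snd q) \<partial>count_space UNIV) \<partial>count_space UNIV)"
    by (intro nn_integral_cong) (subst csum_prod, simp)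
  finally show ?thesis .
qed

lemma csum_pair_split:
  fixes F :: "'a::countable \<times> 'b::countable \<Rightarrow> ennreal"
  shows "(\<integral>\<^sup>+q. F q \<partial>count_space UNIV) = (\<integral>\<^sup>+x. (\<integral>\<^sup>+y. F (x, y) \<partial>count_space UNIV) \<partial>count_space UNIV)"
  by (rule csum_prod)

lemma csum_sum_finite:
  fixes f :: "'i \<Rightarrow> 'a \<Rightarrow> ennreal"
  shows "(\<integral>\<^sup>+x. (\<Sum>i\<in>S. f i x) \<partial>count_space A) = (\<Sum>i\<in>S. (\<integral>\<^sup>+x. f i x \<partial>count_space A))"
  by (rule nn_integral_sum) auto

type_synonym qix = "int \<times> bool"
type_synonym xix = "(qix \<times> qix) + ((nat \<times> (qix \<times> qix)) + ((nat \<times> (qix \<times> qix)) + (nat \<times> (qix \<times> qix))))"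

definition PH :: "(real \<Rightarrow> real^2) \<Rightarrow> nat \<Rightarrow> qix \<Rightarrow> real \<Rightarrow> real" where
  "PH u j q = dl u j (fst q) (snd q)"

fun TF :: "(real \<Rightarrow> real^2) \<Rightarrow> (real \<Rightarrow> real^2) \<Rightarrow> xix \<Rightarrow> real \<times> real \<Rightarrow> real" where
  "TF \<phi> \<psi> (Inl (q1, q2)) = tensor (PH \<phi> 0 q1) (PH \<phi> 0 q2)"
| "TF \<phi> \<psi> (Inr (Inl (j, (q1, q2)))) = tensor (PH \<phi> j q1) (PH \<psi> j q2)"
| "TF \<phi> \<psi> (Inr (Inr (Inl (j, (q1, q2))))) = tensor (PH \<psi> j q1) (PH \<phi> j q2)"
| "TF \<phi> \<psi> (Inr (Inr (Inr (j, (q1, q2))))) = tensor (PH \<psi> j q1) (PH \<psi> j q2)"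

lemma TF_simps:
  "TF \<phi> \<psi> (Inl x) = tensor (PH \<phi> 0 (fst x)) (PH \<phi> 0 (snd x))"
  "TF \<phi> \<psi> (Inr (Inl p)) = tensor (PH \<phi> (fst p) (fst (snd p))) (PH \<psi> (fst p) (snd (snd p)))"
  "TF \<phi> \<psi> (Inr (Inr (Inl p))) = tensor (PH \<psi> (fst p) (fst (snd p))) (PH \<phi> (fst p) (snd (snd p)))"
  "TF \<phi> \<psi> (Inr (Inr (Inr p))) = tensor (PH \<psi> (fst p) (fst (snd p))) (PH \<psi> (fst p) (snd (snd p)))"
  by (cases x; simp) (cases p; cases "snd p"; simp)+

lemma xix_cases:
  fixes x :: xix
  obtains q1 q2 where "x = Inl (q1, q2)"
    | j q1 q2 where "x = Inr (Inl (j, (q1, q2)))"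
    | j q1 q2 where "x = Inr (Inr (Inl (j, (q1, q2))))"
    | j q1 q2 where "x = Inr (Inr (Inr (j, (q1, q2))))"
  by (metis sumE surj_pair)

context
  fixes \<phi> \<psi> :: "real \<Rightarrow> real^2"
  assumes P: "par (e1 \<phi> \<psi>) UNIV"
begin

lemma sq_PH_phi: "sq lborel (PH \<phi> j q)"
  unfolding PH_def by (rule sq_dl_phi[OF P])

lemma sq_PH_psi: "sq lborel (PH \<psi> j q)"
  unfolding PH_def by (rule sq_dl_psi[OF P])

lemma ip_PH_phi_phi: "ip lborel (PH \<phi> j q) (PH \<phi> j q') = (if q = q' then 1 else 0)"
  unfolding PH_def using ip_phi_phi[OF P, of j "fst q" "snd q" "fst q'" "snd q'"]
  by (simp add: prod_eq_iff)

lemma ip_PH_psi_psi: "ip lborel (PH \<psi> i q) (PH \<psi> i' q') = (if i = i' \<and> q = q' then 1 else 0)"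
  unfolding PH_def using ip_psi_psi[OF P, of i "fst q" "snd q" i' "fst q'" "snd q'"]
  by (simp add: prod_eq_iff)

lemma ip_PH_phi_psi: "j \<le> i \<Longrightarrow> ip lborel (PH \<phi> j q) (PH \<psi> i q') = 0"
  unfolding PH_def by (rule ip_phi_psi[OF P])

lemma ip_PH_psi_phi: "j \<le> i \<Longrightarrow> ip lborel (PH \<psi> i q') (PH \<phi> j q) = 0"
  using ip_PH_phi_psi by (simp add: ip_sym)

lemma ip_cross_prod: "ip lborel (PH \<phi> j q1) (PH \<psi> i r1) * ip lborel (PH \<psi> j q2) (PH \<phi> i r2) = 0"
proof (cases "j \<le> i")
  case True then show ?thesis by (simp add: ip_PH_phi_psi)
next
  case False then show ?thesis by (simp add: ip_PH_psi_phi)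
qed

lemma ip_cross_prod': "ip lborel (PH \<psi> j q1) (PH \<phi> i r1) * ip lborel (PH \<phi> j q2) (PH \<psi> i r2) = 0"
  using ip_cross_prod[of i r1 j q1 r2 q2] by (simp add: ip_sym mult.commute)

lemma sq_TF: "sq PL (TF \<phi> \<psi> x)"
  by (cases x rule: xix_cases) (auto intro!: sq_tensor sq_PH_phi sq_PH_psi)

lemma ON_TF: "ON PL (TF \<phi> \<psi>) UNIV"
  unfolding ON_def
proof (intro conjI ballI)
  fix x y :: xix
  show "ip PL (TF \<phi> \<psi> x) (TF \<phi> \<psi> y) = (if x = y then 1 else 0)"
    by (cases x rule: xix_cases; cases y rule: xix_cases)
       (auto simp: ip_tensor sq_PH_phi sq_PH_psi ip_PH_phi_phi ip_PH_psi_psi ip_PH_phi_psi ip_PH_psi_phi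
         ip_cross_prod ip_cross_prod')
qed (rule sq_TF)

lemma xside:
  assumes h: "sq PL h" and b: "sq lborel b"
  shows "(\<integral>\<^sup>+q. ennreal ((ip PL h (tensor (PH \<phi> j q) b))\<^sup>2) \<partial>count_space UNIV) =
    (\<integral>\<^sup>+q. ennreal ((ip PL h (tensor (PH \<phi> 0 q) b))\<^sup>2) \<partial>count_space UNIV) +
    (\<Sum>i<j. (\<integral>\<^sup>+q. ennreal ((ip PL h (tensor (PH \<psi> i q) b))\<^sup>2) \<partial>count_space UNIV))"
proof -
  have eq: "ip PL h (tensor (PH u l q) b) = ip lborel (Hb h b) (PH u l q)" if "sq lborel (PH u l q)" for u l q
    using ip_tensor_Hb[OF h that b] by (simp add: ip_sym)
  have A: "(\<integral>\<^sup>+q. ennreal ((ip PL h (tensor (PH \<phi> l q) b))\<^sup>2) \<partial>count_space UNIV) = Aphi \<phi> (Hb h b) l" for l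
  proof -
    have "\<forall>q. ip PL h (tensor (PH \<phi> l q) b) = ip lborel (Hb h b) (PH \<phi> l q)" using eq sq_PH_phi by blast
    then show ?thesis by (simp add: Aphi_def[OF P] PH_def)
  qed
  have B: "(\<integral>\<^sup>+q. ennreal ((ip PL h (tensor (PH \<psi> l q) b))\<^sup>2) \<partial>count_space UNIV) = Apsi \<psi> (Hb h b) l" for l
  proof -
    have "\<forall>q. ip PL h (tensor (PH \<psi> l q) b) = ip lborel (Hb h b) (PH \<psi> l q)" using eq sq_PH_psi by blast
    then show ?thesis by (simp add: Apsi_def[OF P] PH_def)
  qed
  show ?thesis unfolding A B by (rule level_identity[OF P sq_Hb[OF h b]])
qed

lemma yside:
  assumes h: "sq PL h" and a: "sq lborel a"
  shows "(\<integral>\<^sup>+q. ennreal ((ip PL h (tensor a (PH \<phi> j q)))\<^sup>2) \<partial>count_space UNIV) =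
    (\<integral>\<^sup>+q. ennreal ((ip PL h (tensor a (PH \<phi> 0 q)))\<^sup>2) \<partial>count_space UNIV) +
    (\<Sum>i<j. (\<integral>\<^sup>+q. ennreal ((ip PL h (tensor a (PH \<psi> i q)))\<^sup>2) \<partial>count_space UNIV))"
proof -
  have eq: "ip PL h (tensor a (PH u l q)) = ip lborel (Ka h a) (PH u l q)" if "sq lborel (PH u l q)" for u l q
    using ip_tensor_Ka[OF h a that] by simp
  have A: "(\<integral>\<^sup>+q. ennreal ((ip PL h (tensor a (PH \<phi> l q)))\<^sup>2) \<partial>count_space UNIV) = Aphi \<phi> (Ka h a) l" for l
  proof -
    have "\<forall>q. ip PL h (tensor a (PH \<phi> l q)) = ip lborel (Ka h a) (PH \<phi> l q)" using eq sq_PH_phi by blast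
    then show ?thesis by (simp add: Aphi_def[OF P] PH_def)
  qed
  have B: "(\<integral>\<^sup>+q. ennreal ((ip PL h (tensor a (PH \<psi> l q)))\<^sup>2) \<partial>count_space UNIV) = Apsi \<psi> (Ka h a) l" for l
  proof -
    have "\<forall>q. ip PL h (tensor a (PH \<psi> l q)) = ip lborel (Ka h a) (PH \<psi> l q)" using eq sq_PH_psi by blast
    then show ?thesis by (simp add: Apsi_def[OF P] PH_def)
  qed
  show ?thesis unfolding A B by (rule level_identity[OF P sq_Ka[OF h a]])
qed

lemma TF_parseval:
  assumes h: "sq PL h"
  shows "(\<integral>\<^sup>+x. ennreal ((ip PL h (TF \<phi> \<psi> x))\<^sup>2) \<partial>count_space UNIV) = ennreal (ip PL h h)"
proof -
  define c where "c a b = ennreal ((ip PL h (tensor a b))\<^sup>2)" for a b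
  define FF where "FF = (\<integral>\<^sup>+q1. (\<integral>\<^sup>+q2. c (PH \<phi> 0 q1) (PH \<phi> 0 q2) \<partial>count_space UNIV) \<partial>count_space UNIV)"
  define B0 where "B0 j = (\<integral>\<^sup>+q1. (\<integral>\<^sup>+q2. c (PH \<phi> 0 q1) (PH \<psi> j q2) \<partial>count_space UNIV) \<partial>count_space UNIV)" for j
  define C0 where "C0 j = (\<integral>\<^sup>+q1. (\<integral>\<^sup>+q2. c (PH \<psi> j q1) (PH \<phi> 0 q2) \<partial>count_space UNIV) \<partial>count_space UNIV)" for j
  define a where "a i j = (\<integral>\<^sup>+q1. (\<integral>\<^sup>+q2. c (PH \<psi> i q1) (PH \<psi> j q2) \<partial>count_space UNIV) \<partial>count_space UNIV)" for i j
  have e1L: "e1 \<phi> \<psi> (Inl (fst q), snd q) = PH \<phi> 0 q" for q by (simp add: PH_def)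
  have e1R: "e1 \<phi> \<psi> (Inr (i, fst q), snd q) = PH \<psi> i q" for i q by (simp add: PH_def)
  have "ennreal (ip PL h h) = (\<integral>\<^sup>+w1. (\<integral>\<^sup>+w2. c (e1 \<phi> \<psi> w1) (e1 \<phi> \<psi> w2) \<partial>count_space UNIV) \<partial>count_space UNIV)"
    using tensor_parseval[OF P P h] unfolding c_def by simp
  also have "\<dots> = (\<integral>\<^sup>+w1. (\<integral>\<^sup>+q2. c (e1 \<phi> \<psi> w1) (PH \<phi> 0 q2) \<partial>count_space UNIV) +
      (\<integral>\<^sup>+i. (\<integral>\<^sup>+q2. c (e1 \<phi> \<psi> w1) (PH \<psi> i q2) \<partial>count_space UNIV) \<partial>count_space UNIV) \<partial>count_space UNIV)"
    by (intro nn_integral_cong) (subst csum_e1_split, simp only: e1L e1R)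
  also have "\<dots> = (\<integral>\<^sup>+q1. (\<integral>\<^sup>+q2. c (PH \<phi> 0 q1) (PH \<phi> 0 q2) \<partial>count_space UNIV) +
      (\<integral>\<^sup>+i. (\<integral>\<^sup>+q2. c (PH \<phi> 0 q1) (PH \<psi> i q2) \<partial>count_space UNIV) \<partial>count_space UNIV) \<partial>count_space UNIV) +
      (\<integral>\<^sup>+i1. (\<integral>\<^sup>+q1. (\<integral>\<^sup>+q2. c (PH \<psi> i1 q1) (PH \<phi> 0 q2) \<partial>count_space UNIV) +
      (\<integral>\<^sup>+i. (\<integral>\<^sup>+q2. c (PH \<psi> i1 q1) (PH \<psi> i q2) \<partial>count_space UNIV) \<partial>count_space UNIV) \<partial>count_space UNIV) \<partial>count_space UNIV)"
    by (subst csum_e1_split, simp only: e1L e1R)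
  also have "\<dots> = FF + (\<integral>\<^sup>+i. B0 i \<partial>count_space UNIV) +
      ((\<integral>\<^sup>+i1. C0 i1 \<partial>count_space UNIV) + (\<integral>\<^sup>+i1. (\<integral>\<^sup>+i2. a i1 i2 \<partial>count_space UNIV) \<partial>count_space UNIV))"
  proof -
    have 1: "(\<integral>\<^sup>+q1. (\<integral>\<^sup>+i. (\<integral>\<^sup>+q2. c (PH \<phi> 0 q1) (PH \<psi> i q2) \<partial>count_space UNIV) \<partial>count_space UNIV) \<partial>count_space UNIV)
        = (\<integral>\<^sup>+i. B0 i \<partial>count_space UNIV)"
      unfolding B0_def by (rule csum_swap)
    have 2: "(\<integral>\<^sup>+q1. (\<integral>\<^sup>+i. (\<integral>\<^sup>+q2. c (PH \<psi> i1 q1) (PH \<psi> i q2) \<partial>count_space UNIV) \<partial>count_space UNIV) \<partial>count_space UNIV)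
        = (\<integral>\<^sup>+i. a i1 i \<partial>count_space UNIV)" for i1
      unfolding a_def by (rule csum_swap)
    show ?thesis unfolding csum_add 1 2 FF_def C0_def ..
  qed
  also have "\<dots> = FF + (\<integral>\<^sup>+j. B0 j + (\<Sum>i<j. a i j) \<partial>count_space UNIV) +
      (\<integral>\<^sup>+j. C0 j + (\<Sum>i<j. a j i) \<partial>count_space UNIV) + (\<integral>\<^sup>+j. a j j \<partial>count_space UNIV)"
    unfolding csum_nat_sum_lessThan[of a] csum_add by (simp add: add_ac)
  also have "\<dots> = (\<integral>\<^sup>+x. ennreal ((ip PL h (TF \<phi> \<psi> x))\<^sup>2) \<partial>count_space UNIV)"
  proof -
    have K1: "(\<integral>\<^sup>+q1. (\<integral>\<^sup>+q2. c (PH \<phi> j q1) (PH \<psi> j q2) \<partial>count_space UNIV) \<partial>count_space UNIV) = B0 j + (\<Sum>i<j. a i j)" for j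
    proof -
      have "(\<integral>\<^sup>+q1. (\<integral>\<^sup>+q2. c (PH \<phi> j q1) (PH \<psi> j q2) \<partial>count_space UNIV) \<partial>count_space UNIV) =
          (\<integral>\<^sup>+q2. (\<integral>\<^sup>+q1. c (PH \<phi> j q1) (PH \<psi> j q2) \<partial>count_space UNIV) \<partial>count_space UNIV)"
        by (rule csum_swap)
      also have "\<dots> = (\<integral>\<^sup>+q2. (\<integral>\<^sup>+q1. c (PH \<phi> 0 q1) (PH \<psi> j q2) \<partial>count_space UNIV) +
          (\<Sum>i<j. (\<integral>\<^sup>+q1. c (PH \<psi> i q1) (PH \<psi> j q2) \<partial>count_space UNIV)) \<partial>count_space UNIV)"
        unfolding c_def by (intro nn_integral_cong xside[OF h sq_PH_psi])
      also have "\<dots> = (\<integral>\<^sup>+q2. (\<integral>\<^sup>+q1. c (PH \<phi> 0 q1) (PH \<psi> j q2) \<partial>count_space UNIV) \<partial>count_space UNIV) +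
          (\<Sum>i<j. (\<integral>\<^sup>+q2. (\<integral>\<^sup>+q1. c (PH \<psi> i q1) (PH \<psi> j q2) \<partial>count_space UNIV) \<partial>count_space UNIV))"
        unfolding csum_add csum_sum_finite ..
      also have "\<dots> = B0 j + (\<Sum>i<j. a i j)"
      proof -
        have s1: "(\<integral>\<^sup>+q2. (\<integral>\<^sup>+q1. c (PH \<phi> 0 q1) (PH \<psi> j q2) \<partial>count_space UNIV) \<partial>count_space UNIV) = B0 j"
          unfolding B0_def by (rule csum_swap[symmetric])
        have s2: "(\<integral>\<^sup>+q2. (\<integral>\<^sup>+q1. c (PH \<psi> i q1) (PH \<psi> j q2) \<partial>count_space UNIV) \<partial>count_space UNIV) = a i j" for i
          unfolding a_def by (rule csum_swap[symmetric])
        show ?thesis by (simp only: s1 s2)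
      qed
      finally show ?thesis .
    qed
    have K2: "(\<integral>\<^sup>+q1. (\<integral>\<^sup>+q2. c (PH \<psi> j q1) (PH \<phi> j q2) \<partial>count_space UNIV) \<partial>count_space UNIV) = C0 j + (\<Sum>i<j. a j i)" for j
    proof -
      have "(\<integral>\<^sup>+q1. (\<integral>\<^sup>+q2. c (PH \<psi> j q1) (PH \<phi> j q2) \<partial>count_space UNIV) \<partial>count_space UNIV) =
          (\<integral>\<^sup>+q1. (\<integral>\<^sup>+q2. c (PH \<psi> j q1) (PH \<phi> 0 q2) \<partial>count_space UNIV) +
          (\<Sum>i<j. (\<integral>\<^sup>+q2. c (PH \<psi> j q1) (PH \<psi> i q2) \<partial>count_space UNIV)) \<partial>count_space UNIV)"
        unfolding c_def by (intro nn_integral_cong yside[OF h sq_PH_psi])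
      also have "\<dots> = C0 j + (\<Sum>i<j. a j i)"
        unfolding csum_add csum_sum_finite C0_def a_def ..
      finally show ?thesis .
    qed
    have "(\<integral>\<^sup>+x. ennreal ((ip PL h (TF \<phi> \<psi> x))\<^sup>2) \<partial>count_space UNIV) =
        (\<integral>\<^sup>+q. c (PH \<phi> 0 (fst q)) (PH \<phi> 0 (snd q)) \<partial>count_space UNIV) +
        ((\<integral>\<^sup>+p. c (PH \<phi> (fst p) (fst (snd p))) (PH \<psi> (fst p) (snd (snd p))) \<partial>count_space UNIV) +
        ((\<integral>\<^sup>+p. c (PH \<psi> (fst p) (fst (snd p))) (PH \<phi> (fst p) (snd (snd p))) \<partial>count_space UNIV) +
        (\<integral>\<^sup>+p. c (PH \<psi> (fst p) (fst (snd p))) (PH \<psi> (fst p) (snd (snd p))) \<partial>count_space UNIV)))"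
      unfolding csum_sum_type TF_simps c_def ..
    also have "\<dots> = FF + ((\<integral>\<^sup>+j. B0 j + (\<Sum>i<j. a i j) \<partial>count_space UNIV) +
        ((\<integral>\<^sup>+j. C0 j + (\<Sum>i<j. a j i) \<partial>count_space UNIV) + (\<integral>\<^sup>+j. a j j \<partial>count_space UNIV)))"
    proof -
      have F: "(\<integral>\<^sup>+q. c (PH \<phi> 0 (fst q)) (PH \<phi> 0 (snd q)) \<partial>count_space UNIV) = FF"
        unfolding FF_def by (subst csum_prod) simp
      have G: "(\<integral>\<^sup>+p. G (fst p) (fst (snd p)) (snd (snd p)) \<partial>count_space UNIV) =
          (\<integral>\<^sup>+j. (\<integral>\<^sup>+q1. (\<integral>\<^sup>+q2. G j q1 q2 \<partial>count_space UNIV) \<partial>count_space UNIV) \<partial>count_space UNIV)"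
        for G :: "nat \<Rightarrow> qix \<Rightarrow> qix \<Rightarrow> ennreal"
        by (subst csum_prod, subst csum_prod) simp
      note G1 = G[of "\<lambda>j q1 q2. c (PH \<phi> j q1) (PH \<psi> j q2)"]
      note G2 = G[of "\<lambda>j q1 q2. c (PH \<psi> j q1) (PH \<phi> j q2)"]
      note G3 = G[of "\<lambda>j q1 q2. c (PH \<psi> j q1) (PH \<psi> j q2)"]
      show ?thesis unfolding F G1 G2 G3 K1 K2 a_def ..
    qed
    finally show ?thesis by (simp add: add_ac)
  qed
  finally show ?thesis by simp
qed

end

lemma approx_real:
  fixes f :: "'p \<Rightarrow> real"
  assumes A: "countable A" and eq: "(\<integral>\<^sup>+p. ennreal (f p) \<partial>count_space A) = ennreal r"
    and d: "\<delta> > 0" and nn: "\<And>p. f p \<ge> 0"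
  shows "\<exists>G. finite G \<and> G \<subseteq> A \<and> r - \<delta> < (\<Sum>p\<in>G. f p)"
proof (cases "r - \<delta> < 0")
  case True then show ?thesis by (intro exI[of _ "{}"]) auto
next
  case False
  then have "ennreal (r - \<delta>) < ennreal r" using d by (intro ennreal_lessI) auto
  then have "ennreal (r - \<delta>) < (\<integral>\<^sup>+p. ennreal (f p) \<partial>count_space A)" using eq by simp
  then obtain G where G: "finite G" "G \<subseteq> A" and lt: "ennreal (r - \<delta>) < (\<Sum>p\<in>G. ennreal (f p))"
    using csum_approx[OF A] by blast
  have "(\<Sum>p\<in>G. ennreal (f p)) = ennreal (\<Sum>p\<in>G. f p)" using nn by (intro sum_ennreal) auto
  with lt have lt2: "ennreal (r - \<delta>) < ennreal (\<Sum>p\<in>G. f p)" by simp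
  have le: "0 \<le> r - \<delta>" using False by simp
  from lt2 have "r - \<delta> < (\<Sum>p\<in>G. f p)" using ennreal_less_iff[OF le] by simp
  with G show ?thesis by blast
qed

lemma cmp_surj: "(i::2) = cmp (i = 1)"
  using exhaust_2[of i] by (auto simp: cmp_def)

lemma cmp_eq1: "(cmp b = 1) = b"
  by (auto simp: cmp_def)

lemma partial_sum_comp:
  "(\<Sum>k\<in>F. Q k *v U k x) $ i = (\<Sum>p\<in>F \<times> UNIV. Q (fst p) $ i $ cmp (snd p) * U (fst p) x $ cmp (snd p))"
proof -
  have "(\<Sum>k\<in>F. Q k *v U k x) $ i = (\<Sum>k\<in>F. \<Sum>a\<in>UNIV. Q k $ i $ cmp a * U k x $ cmp a)"
    by (simp add: sum_component matrix_vector_mult_def sum_2_comp)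
  also have "\<dots> = (\<Sum>p\<in>F \<times> UNIV. Q (fst p) $ i $ cmp (snd p) * U (fst p) x $ cmp (snd p))"
    by (simp add: sum.cartesian_product case_prod_beta)
  finally show ?thesis .
qed

lemma orthogonal_basis_from_scalar:
  fixes U :: "'i \<Rightarrow> 'a::euclidean_space \<Rightarrow> real^2" and E :: "'i \<times> bool \<Rightarrow> 'a \<Rightarrow> real"
    and c :: "'i \<Rightarrow> real"
  assumes cpos: "\<And>t. t \<in> I \<Longrightarrow> c t > 0"
    and UE: "\<And>t a x. t \<in> I \<Longrightarrow> U t x $ cmp a = c t * E (t, a) x"
    and ON: "ON lborel E (I \<times> UNIV)"
    and cI: "countable I"
    and PS: "\<And>h. sq lborel h \<Longrightarrow>
       (\<integral>\<^sup>+p. ennreal ((ip lborel h (E p))\<^sup>2) \<partial>count_space (I \<times> UNIV)) = ennreal (ip lborel h h)"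
  shows "orthogonal_basis L2 U I"
proof -
  have Uc: "U t x $ i = c t * E (t, i = 1) x" if "t \<in> I" for t x i
    using UE[where a = "i = 1", OF that] cmp_surj[of i] by simp
  have sqE: "sq lborel (E (t, a))" if "t \<in> I" for t a
    using ON that unfolding ON_def by auto
  have ipE: "ip lborel (E p) (E q) = (if p = q then 1 else 0)" if "p \<in> I \<times> UNIV" "q \<in> I \<times> UNIV" for p q
    using ON that unfolding ON_def by blast
  have sqU: "sq lborel (\<lambda>x. U t x $ i)" if "t \<in> I" for t i
    unfolding Uc[OF that] by (rule sq_cmult[OF sqE[OF that]])
  have UL2: "U t \<in> L2" if "t \<in> I" for t
    using sqU[OF that] by (intro L2_I)
  have cIU: "countable (I \<times> (UNIV :: bool set))" using cI by simp
  have sp: "star_prod (U t) (U s) $ i $ j = c t * c s * ip lborel (E (t, i = 1)) (E (s, j = 1))"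
    if "t \<in> I" "s \<in> I" for t s i j
    unfolding star_prod_nth Uc[OF that(1)] Uc[OF that(2)] ip_cmult_left ip_cmult_right by simp
  have ofam: "orthogonal_family U I"
    unfolding orthogonal_family_def
  proof (intro conjI ballI impI)
    fix t s assume ts: "t \<in> I" "s \<in> I" "t \<noteq> s"
    show "star_prod (U t) (U s) = 0"
      unfolding vec_eq_iff using ts by (auto simp: sp ipE)
  next
    fix t assume t: "t \<in> I"
    show "\<exists>r>0. star_prod (U t) (U t) = r *\<^sub>R mat 1"
    proof (intro exI conjI)
      show "c t * c t > 0" using cpos[OF t] by simp
      show "star_prod (U t) (U t) = (c t * c t) *\<^sub>R mat 1"
        unfolding vec_eq_iff using t by (auto simp: sp ipE mat1_nth forall_2)
    qed
  qed
  have coef: "Q t $ i $ cmp b = ip lborel (\<lambda>x. f x $ i) (E (t, b)) / c t"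
    if f: "f \<in> L2" and Q: "L2_expansion f Q U I" and t: "t \<in> I" for f Q t i b
  proof -
    have fi: "sq lborel (\<lambda>x. f x $ i)" by (rule L2_D[OF f])
    define v where "v = ip lborel (\<lambda>x. f x $ i) (E (t, b)) - c t * Q t $ i $ cmp b"
    have "\<bar>v\<bar> < \<epsilon>" if e: "\<epsilon> > 0" for \<epsilon>
    proof -
      obtain F0 where F0: "finite F0" "F0 \<subseteq> I"
        and F0lt': "\<forall>F. finite F \<and> F0 \<subseteq> F \<and> F \<subseteq> I \<longrightarrow> L2_norm (\<lambda>x. f x - (\<Sum>k\<in>F. Q k *v U k x)) < \<epsilon>"
        using Q[unfolded L2_expansion_def, rule_format, OF e] by (elim exE conjE) (rule that)
      have F0lt: "L2_norm (\<lambda>x. f x - (\<Sum>k\<in>F. Q k *v U k x)) < \<epsilon>" if "finite F \<and> F0 \<subseteq> F \<and> F \<subseteq> I" for F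
        using F0lt' that by blast
      define F where "F = insert t F0"
      have F: "finite F" "F0 \<subseteq> F" "F \<subseteq> I" "t \<in> F" using F0 t by (auto simp: F_def)
      define S where "S = (\<lambda>x. \<Sum>k\<in>F. Q k *v U k x)"
      have Si: "S x $ j = (\<Sum>p\<in>F \<times> UNIV. (Q (fst p) $ j $ cmp (snd p) * c (fst p)) * E p x)" for x j
        unfolding S_def partial_sum_comp using F(3)
        by (intro sum.cong refl) (auto simp: UE mult.assoc)
      have sqEp: "\<And>p. p \<in> F \<times> UNIV \<Longrightarrow> sq lborel (E p)" using F(3) sqE by auto
      have sqS: "sq lborel (\<lambda>x. S x $ j)" for j
        unfolding Si using F(1) by (intro sq_sum sq_cmult sqEp) auto
      have DL2: "(\<lambda>x. f x - S x) \<in> L2"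
        using fi sqS L2_D[OF f] by (intro L2_I) (auto intro!: sq_diff)
      have ipS: "ip lborel (\<lambda>x. S x $ i) (E (t, b)) = c t * Q t $ i $ cmp b"
      proof -
        have "ip lborel (\<lambda>x. S x $ i) (E (t, b)) =
            (\<Sum>p\<in>F \<times> UNIV. (Q (fst p) $ i $ cmp (snd p) * c (fst p)) * ip lborel (E p) (E (t, b)))"
          unfolding Si using F(1) sqE[OF t]
          by (subst ip_sum_left) (auto intro!: sq_cmult sqEp simp: ip_cmult_left)
        also have "\<dots> = (\<Sum>p\<in>F \<times> UNIV. if p = (t, b) then Q t $ i $ cmp b * c t else 0)"
        proof (intro sum.cong refl)
          fix p assume "p \<in> F \<times> (UNIV :: bool set)"
          then have "p \<in> I \<times> UNIV" using F(3) by auto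
          then show "Q (fst p) $ i $ cmp (snd p) * c (fst p) * ip lborel (E p) (E (t, b)) =
              (if p = (t, b) then Q t $ i $ cmp b * c t else 0)"
            using t by (auto simp: ipE)
        qed
        also have "\<dots> = c t * Q t $ i $ cmp b" using F(1,4) by simp
        finally show ?thesis .
      qed
      have "v = ip lborel (\<lambda>x. f x $ i - S x $ i) (E (t, b))"
        unfolding v_def ipS[symmetric] using fi sqS sqE[OF t] by (simp add: ip_diff_left)
      then have "v\<^sup>2 \<le> ip lborel (\<lambda>x. f x $ i - S x $ i) (\<lambda>x. f x $ i - S x $ i) * ip lborel (E (t, b)) (E (t, b))"
        using cauchy_schwarz_ip[OF sq_diff[OF fi sqS] sqE[OF t]] by simp
      also have "\<dots> = ip lborel (\<lambda>x. (f x - S x) $ i) (\<lambda>x. (f x - S x) $ i)"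
        using ipE[of "(t, b)" "(t, b)"] t by simp
      also have "\<dots> \<le> (L2_norm (\<lambda>x. f x - S x))\<^sup>2"
        unfolding L2_norm_sq[OF DL2] using exhaust_2[of i]
        using ip_self_nonneg[of lborel "\<lambda>x. (f x - S x) $ 1"] ip_self_nonneg[of lborel "\<lambda>x. (f x - S x) $ 2"]
        by auto
      also have "\<dots> < \<epsilon>\<^sup>2"
      proof -
        have "L2_norm (\<lambda>x. f x - S x) < \<epsilon>" using F0lt[of F] F unfolding S_def by blast
        moreover have "0 \<le> L2_norm (\<lambda>x. f x - S x)" by (simp add: L2_norm_def)
        ultimately show ?thesis by (intro power_strict_mono) auto
      qed
      finally have "v\<^sup>2 < \<epsilon>\<^sup>2" .
      then have "\<bar>v\<bar>\<^sup>2 < \<epsilon>\<^sup>2" by simp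
      then show ?thesis by (rule power2_less_imp_less) (use e in simp)
    qed
    then have "v = 0"
    proof (rule_tac ccontr)
      assume a1: "\<And>\<epsilon>. \<epsilon> > 0 \<Longrightarrow> \<bar>v\<bar> < \<epsilon>" and a2: "v \<noteq> 0"
      have "\<bar>v\<bar> < \<bar>v\<bar>" by (rule a1) (use a2 in simp)
      then show False by simp
    qed
    then show ?thesis unfolding v_def using cpos[OF t] by (simp add: field_simps)
  qed
  define Qf where "Qf f t = ((\<chi> i j. ip lborel (\<lambda>x. f x $ i) (E (t, (j::2) = 1)) / c t) :: real^2^2)" for f :: "'a \<Rightarrow> real^2" and t
  have exp: "L2_expansion f (Qf f) U I" if f: "f \<in> L2" for f
    unfolding L2_expansion_def
  proof (intro allI impI)
    fix \<epsilon> :: real assume e: "\<epsilon> > 0"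
    have fi: "sq lborel (\<lambda>x. f x $ i)" for i by (rule L2_D[OF f])
    have d: "\<epsilon>\<^sup>2 / 2 > 0" using e by simp
    have "\<exists>G. finite G \<and> G \<subseteq> I \<times> UNIV \<and> ip lborel (\<lambda>x. f x $ i) (\<lambda>x. f x $ i) - \<epsilon>\<^sup>2 / 2 <
        (\<Sum>p\<in>G. (ip lborel (\<lambda>x. f x $ i) (E p))\<^sup>2)" for i
      by (rule approx_real[OF cIU PS[OF fi] d]) simp
    then obtain G where G: "\<And>i. finite (G i)" "\<And>i. G i \<subseteq> I \<times> UNIV"
      and Glt: "\<And>i. ip lborel (\<lambda>x. f x $ i) (\<lambda>x. f x $ i) - \<epsilon>\<^sup>2 / 2 < (\<Sum>p\<in>G i. (ip lborel (\<lambda>x. f x $ i) (E p))\<^sup>2)"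
      by (metis (no_types))
    define F0 where "F0 = fst ` (G 1 \<union> G 2)"
    have F0: "finite F0" "F0 \<subseteq> I" using G(1)[of 1] G(1)[of 2] G(2)[of 1] G(2)[of 2] by (auto simp: F0_def)
    show "\<exists>F0. finite F0 \<and> F0 \<subseteq> I \<and> (\<forall>F. finite F \<and> F0 \<subseteq> F \<and> F \<subseteq> I \<longrightarrow>
        L2_norm (\<lambda>x. f x - (\<Sum>k\<in>F. Qf f k *v U k x)) < \<epsilon>)"
    proof (intro exI conjI allI impI)
      fix F assume F: "finite F \<and> F0 \<subseteq> F \<and> F \<subseteq> I"
      define S where "S = (\<lambda>x. \<Sum>k\<in>F. Qf f k *v U k x)"
      have Si: "S x $ j = (\<Sum>p\<in>F \<times> UNIV. ip lborel (\<lambda>x. f x $ j) (E p) * E p x)" for x j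
        unfolding S_def partial_sum_comp
      proof (intro sum.cong refl)
        fix p :: "'i \<times> bool" assume "p \<in> F \<times> UNIV"
        then have tp: "fst p \<in> I" using F by auto
        show "Qf f (fst p) $ j $ cmp (snd p) * U (fst p) x $ cmp (snd p) = ip lborel (\<lambda>x. f x $ j) (E p) * E p x"
          using UE[where a = "snd p", OF tp] cpos[OF tp] by (simp add: Qf_def cmp_eq1)
      qed
      have FU: "F \<times> UNIV \<subseteq> I \<times> UNIV" "finite (F \<times> (UNIV :: bool set))" using F by auto
      have sqEp: "\<And>p. p \<in> F \<times> UNIV \<Longrightarrow> sq lborel (E p)" using F sqE by auto
      have sqS: "sq lborel (\<lambda>x. S x $ j)" for j
        unfolding Si using FU(2) by (intro sq_sum sq_cmult sqEp) auto
      have DL2: "(\<lambda>x. f x - S x) \<in> L2"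
        using fi sqS by (intro L2_I) (auto intro!: sq_diff)
      have comp_small: "ip lborel (\<lambda>x. (f x - S x) $ i) (\<lambda>x. (f x - S x) $ i) < \<epsilon>\<^sup>2 / 2" for i
      proof -
        have GF: "G i \<subseteq> F \<times> UNIV" using G(2)[of i] F exhaust_2[of i] by (force simp: F0_def)
        have "ip lborel (\<lambda>x. (f x - S x) $ i) (\<lambda>x. (f x - S x) $ i) =
            ip lborel (\<lambda>x. f x $ i) (\<lambda>x. f x $ i) - (\<Sum>p\<in>F \<times> UNIV. (ip lborel (\<lambda>x. f x $ i) (E p))\<^sup>2)"
          using bessel_identity[OF ON FU(2) FU(1) fi[of i], of "\<lambda>p. ip lborel (\<lambda>x. f x $ i) (E p)"]
          by (simp add: Si)
        also have "\<dots> \<le> ip lborel (\<lambda>x. f x $ i) (\<lambda>x. f x $ i) - (\<Sum>p\<in>G i. (ip lborel (\<lambda>x. f x $ i) (E p))\<^sup>2)"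
          using sum_mono2[OF FU(2) GF, of "\<lambda>p. (ip lborel (\<lambda>x. f x $ i) (E p))\<^sup>2"] by simp
        also have "\<dots> < \<epsilon>\<^sup>2 / 2" using Glt[of i] by simp
        finally show ?thesis .
      qed
      have "(L2_norm (\<lambda>x. f x - S x))\<^sup>2 < \<epsilon>\<^sup>2"
        unfolding L2_norm_sq[OF DL2] using comp_small[of 1] comp_small[of 2] by simp
      moreover have "0 \<le> L2_norm (\<lambda>x. f x - S x)" by (simp add: L2_norm_def)
      ultimately have "L2_norm (\<lambda>x. f x - S x) < \<epsilon>"
        using e by (simp add: power2_less_imp_less)
      then show "L2_norm (\<lambda>x. f x - (\<Sum>k\<in>F. Qf f k *v U k x)) < \<epsilon>" unfolding S_def .
    qed (use F0 in auto)
  qed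
  have bas: "basis_of L2 U I"
    unfolding basis_of_def
  proof (intro conjI ballI)
    show "\<And>t. t \<in> I \<Longrightarrow> U t \<in> L2" by (rule UL2)
    fix f :: "'a \<Rightarrow> real^2" assume f: "f \<in> L2"
    show "\<exists>Q. L2_expansion f Q U I \<and> (\<forall>Q'. L2_expansion f Q' U I \<longrightarrow> (\<forall>k\<in>I. Q' k = Q k))"
    proof (intro exI conjI allI impI ballI)
      show "L2_expansion f (Qf f) U I" by (rule exp[OF f])
      fix Q' k assume Q': "L2_expansion f Q' U I" and k: "k \<in> I"
      show "Q' k = Qf f k"
        unfolding vec_eq_iff
      proof (intro allI)
        fix i j :: 2
        have "Q' k $ i $ cmp (j = 1) = Qf f k $ i $ cmp (j = 1)"
          using coef[OF f Q' k, of i "j = 1"] coef[OF f exp[OF f] k, of i "j = 1"] by simp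
        then show "Q' k $ i $ j = Qf f k $ i $ j" using cmp_surj[of j] by simp
      qed
    qed
  qed
  show ?thesis unfolding orthogonal_basis_def using ofam bas by simp
qed

fun cT :: "tidx \<Rightarrow> real" where
  "cT (PhiIdx i k) = 1"
| "cT (PsiIdx i j k) = 1 / 2 ^ j"

fun sigma :: "tidx \<times> bool \<Rightarrow> xix" where
  "sigma (PhiIdx i k, a) = Inl ((fst k, a), (snd k, if i = 1 then a else \<not> a))"
| "sigma (PsiIdx i j k, a) =
     (let q = ((fst k, a), (snd k, if odd i then a else \<not> a)) in
      if i \<le> 2 then Inr (Inl (j, q)) else if i \<le> 4 then Inr (Inr (Inl (j, q))) else Inr (Inr (Inr (j, q))))"

fun tau :: "xix \<Rightarrow> tidx \<times> bool" where
  "tau (Inl ((k1, a), (k2, b))) = (PhiIdx (if a = b then 1 else 2) (k1, k2), a)"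
| "tau (Inr (Inl (j, ((k1, a), (k2, b))))) = (PsiIdx (if a = b then 1 else 2) j (k1, k2), a)"
| "tau (Inr (Inr (Inl (j, ((k1, a), (k2, b)))))) = (PsiIdx (if a = b then 3 else 4) j (k1, k2), a)"
| "tau (Inr (Inr (Inr (j, ((k1, a), (k2, b)))))) = (PsiIdx (if a = b then 5 else 6) j (k1, k2), a)"

lemma tensor_index_cases:
  assumes "t \<in> tensor_index"
  obtains k where "t = PhiIdx 1 k" | k where "t = PhiIdx 2 k"
    | j k where "t = PsiIdx 1 j k" | j k where "t = PsiIdx 2 j k"
    | j k where "t = PsiIdx 3 j k" | j k where "t = PsiIdx 4 j k"
    | j k where "t = PsiIdx 5 j k" | j k where "t = PsiIdx 6 j k"
proof -
  from assms consider (a) i k where "t = PhiIdx i k" "i \<in> {1, 2}" | (b) i j k where "t = PsiIdx i j k" "i \<in> {1..6}"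
    unfolding tensor_index_def by blast
  then show ?thesis
  proof cases
    case a then show ?thesis using that by auto
  next
    case b
    then have "i = 1 \<or> i = 2 \<or> i = 3 \<or> i = 4 \<or> i = 5 \<or> i = 6" by auto
    then show ?thesis using b that by auto
  qed
qed

lemma tau_sigma: "t \<in> tensor_index \<Longrightarrow> tau (sigma (t, a)) = (t, a)"
  by (erule tensor_index_cases) (auto simp: Let_def)

lemma sigma_tau: "sigma (tau x) = x"
  by (cases x rule: xix_cases) (auto simp: Let_def)

lemma tau_in: "tau x \<in> tensor_index \<times> UNIV"
  by (cases x rule: xix_cases) (auto simp: tensor_index_def)

lemma bij_sigma: "bij_betw sigma (tensor_index \<times> UNIV) UNIV"
proof (rule bij_betw_byWitness[where f' = tau])
  show "\<forall>p\<in>tensor_index \<times> UNIV. tau (sigma p) = p" using tau_sigma by auto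
  show "\<forall>x\<in>UNIV. sigma (tau x) = x" using sigma_tau by auto
  show "sigma ` (tensor_index \<times> UNIV) \<subseteq> UNIV" by simp
  show "tau ` UNIV \<subseteq> tensor_index \<times> UNIV" using tau_in by blast
qed

lemma countable_tensor_index: "countable tensor_index"
proof -
  have "tensor_index \<subseteq> range (\<lambda>p. PhiIdx (fst p) (snd p)) \<union> range (\<lambda>p. PsiIdx (fst p) (fst (snd p)) (snd (snd p)))"
  proof
    fix t :: tidx
    show "t \<in> range (\<lambda>p. PhiIdx (fst p) (snd p)) \<union> range (\<lambda>p. PsiIdx (fst p) (fst (snd p)) (snd (snd p)))"
    proof (cases t)
      case (PhiIdx i k) then show ?thesis by (auto intro!: image_eqI[where x = "(i, k)"])
    next
      case (PsiIdx i j k) then show ?thesis by (auto intro!: image_eqI[where x = "(i, j, k)"])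
    qed
  qed
  moreover have "countable (range (\<lambda>p. PhiIdx (fst p) (snd p)) \<union> range (\<lambda>p. PsiIdx (fst p) (fst (snd p)) (snd (snd p))))"
    by simp
  ultimately show ?thesis by (rule countable_subset)
qed

lemma vec2_cmp: "vec2 p q $ cmp a = (if a then p else q)"
  by (auto simp: cmp_def)

lemma norm_fac: "(1 / 2 ^ j) * ((sqrt 2 ^ j * A) * (sqrt 2 ^ j * B)) = (A * B :: real)"
proof -
  have "(sqrt 2 ^ j * A) * (sqrt 2 ^ j * B) = (sqrt 2 ^ j * sqrt 2 ^ j) * (A * B)"
    by (simp only: mult_ac)
  also have "\<dots> = 2 ^ j * (A * B)" by (simp only: sqrt2_pow_sq)
  finally have eq: "(sqrt 2 ^ j * A) * (sqrt 2 ^ j * B) = 2 ^ j * (A * B)" .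
  show ?thesis unfolding eq by simp
qed

lemma TF_scale: "1 / 2 ^ j * tensor (PH u j q1) (PH v j q2) (x, y) =
    u (2 ^ j * x - of_int (fst q1)) $ cmp (snd q1) * v (2 ^ j * y - of_int (fst q2)) $ cmp (snd q2)"
  unfolding tensor_apply PH_def dl_def by (rule norm_fac)

lemma TF_0: "tensor (PH u 0 q1) (PH v 0 q2) (x, y) =
    u (x - of_int (fst q1)) $ cmp (snd q1) * v (y - of_int (fst q2)) $ cmp (snd q2)"
  by (simp add: PH_def dl_def)

lemma tens_cmp:
  "tens s u v j k (x, y) $ cmp a =
     (1 / 2 ^ j) * ((sqrt 2 ^ j * (u (2 ^ j * x - of_int (fst k)) $ cmp a)) *
       (sqrt 2 ^ j * (v (2 ^ j * y - of_int (snd k)) $ cmp (if s then \<not> a else a))))"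
  unfolding norm_fac by (cases a; cases s) (auto simp: tens_def vec2_cmp cmp_def)

lemma sig_simps:
  "sigma (PhiIdx 1 k, a) = Inl ((fst k, a), (snd k, a))"
  "sigma (PhiIdx 2 k, a) = Inl ((fst k, a), (snd k, \<not> a))"
  "sigma (PsiIdx 1 j k, a) = Inr (Inl (j, ((fst k, a), (snd k, a))))"
  "sigma (PsiIdx 2 j k, a) = Inr (Inl (j, ((fst k, a), (snd k, \<not> a))))"
  "sigma (PsiIdx 3 j k, a) = Inr (Inr (Inl (j, ((fst k, a), (snd k, a)))))"
  "sigma (PsiIdx 4 j k, a) = Inr (Inr (Inl (j, ((fst k, a), (snd k, \<not> a)))))"
  "sigma (PsiIdx 5 j k, a) = Inr (Inr (Inr (j, ((fst k, a), (snd k, a)))))"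
  "sigma (PsiIdx 6 j k, a) = Inr (Inr (Inr (j, ((fst k, a), (snd k, \<not> a)))))"
  by (simp_all add: Let_def)

lemma tf_simps:
  "tensor_family \<phi> \<psi> (PhiIdx 1 k) = Phi1 \<phi> k"
  "tensor_family \<phi> \<psi> (PhiIdx 2 k) = Phi2 \<phi> k"
  "tensor_family \<phi> \<psi> (PsiIdx 1 j k) = tens False \<phi> \<psi> j k"
  "tensor_family \<phi> \<psi> (PsiIdx 2 j k) = tens True \<phi> \<psi> j k"
  "tensor_family \<phi> \<psi> (PsiIdx 3 j k) = tens False \<psi> \<phi> j k"
  "tensor_family \<phi> \<psi> (PsiIdx 4 j k) = tens True \<psi> \<phi> j k"
  "tensor_family \<phi> \<psi> (PsiIdx 5 j k) = tens False \<psi> \<psi> j k"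
  "tensor_family \<phi> \<psi> (PsiIdx 6 j k) = tens True \<psi> \<psi> j k"
  by (simp_all add: Psi1_def Psi2_def Psi3_def Psi4_def Psi5_def Psi6_def)

lemma UE_all:
  assumes t: "t \<in> tensor_index"
  shows "tensor_family \<phi> \<psi> t p $ cmp a = cT t * TF \<phi> \<psi> (sigma (t, a)) p"
proof -
  obtain x y where p: "p = (x, y)" by (cases p)
  have "tensor_family \<phi> \<psi> t (x, y) $ cmp a = cT t * TF \<phi> \<psi> (sigma (t, a)) (x, y)"
    using t
  proof (rule tensor_index_cases)
    fix k assume tt: "t = PhiIdx 1 k"
    show ?thesis unfolding tt sig_simps tf_simps cT.simps TF.simps TF_0
      by (cases a) (simp_all add: Phi1_def cmp_def)
  next
    fix k assume tt: "t = PhiIdx 2 k"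
    show ?thesis unfolding tt sig_simps tf_simps cT.simps TF.simps TF_0
      by (cases a) (simp_all add: Phi2_def cmp_def)
  next
    fix j k assume tt: "t = PsiIdx 1 j k"
    show ?thesis unfolding tt sig_simps tf_simps cT.simps TF.simps TF_scale
      by (cases a) (simp_all add: tens_def cmp_def)
  next
    fix j k assume tt: "t = PsiIdx 2 j k"
    show ?thesis unfolding tt sig_simps tf_simps cT.simps TF.simps TF_scale
      by (cases a) (simp_all add: tens_def cmp_def)
  next
    fix j k assume tt: "t = PsiIdx 3 j k"
    show ?thesis unfolding tt sig_simps tf_simps cT.simps TF.simps TF_scale
      by (cases a) (simp_all add: tens_def cmp_def)
  next
    fix j k assume tt: "t = PsiIdx 4 j k"
    show ?thesis unfolding tt sig_simps tf_simps cT.simps TF.simps TF_scale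
      by (cases a) (simp_all add: tens_def cmp_def)
  next
    fix j k assume tt: "t = PsiIdx 5 j k"
    show ?thesis unfolding tt sig_simps tf_simps cT.simps TF.simps TF_scale
      by (cases a) (simp_all add: tens_def cmp_def)
  next
    fix j k assume tt: "t = PsiIdx 6 j k"
    show ?thesis unfolding tt sig_simps tf_simps cT.simps TF.simps TF_scale
      by (cases a) (simp_all add: tens_def cmp_def)
  qed
  then show ?thesis unfolding p .
qed

theorem corollary2:
  fixes \<phi> \<psi> :: "real \<Rightarrow> real^2"
  assumes "vector_wavelet \<phi> \<psi>"
  shows "orthogonal_basis (L2 :: (real \<times> real \<Rightarrow> real^2) set) (tensor_family \<phi> \<psi>) tensor_index"
proof -
  have ob: "orthonormal_basis L2 (wavelet_system \<phi> \<psi>) UNIV"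
    using assms unfolding vector_wavelet_def by blast
  have P: "par (e1 \<phi> \<psi>) UNIV" by (rule e1_par[OF ob])
  have PLeq: "PL = lborel" by (rule lborel_prod)
  have inj: "inj_on sigma (tensor_index \<times> UNIV)" using bij_sigma by (rule bij_betw_imp_inj_on)
  show ?thesis
  proof (rule orthogonal_basis_from_scalar[where c = cT and E = "\<lambda>p. TF \<phi> \<psi> (sigma p)"])
    show "\<And>t. t \<in> tensor_index \<Longrightarrow> 0 < cT t"
      by (erule tensor_index_cases) auto
    show "\<And>t a x. t \<in> tensor_index \<Longrightarrow> tensor_family \<phi> \<psi> t x $ cmp a = cT t * TF \<phi> \<psi> (sigma (t, a)) x"
      by (rule UE_all)
    show "ON lborel (\<lambda>p. TF \<phi> \<psi> (sigma p)) (tensor_index \<times> UNIV)"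
      unfolding ON_def
    proof (intro conjI ballI)
      fix p assume "p \<in> tensor_index \<times> (UNIV :: bool set)"
      show "sq lborel (TF \<phi> \<psi> (sigma p))" using sq_TF[OF P] unfolding PLeq by blast
    next
      fix p q assume pq: "p \<in> tensor_index \<times> (UNIV :: bool set)" "q \<in> tensor_index \<times> (UNIV :: bool set)"
      have "ip lborel (TF \<phi> \<psi> (sigma p)) (TF \<phi> \<psi> (sigma q)) = (if sigma p = sigma q then 1 else 0)"
        using ON_TF[OF P] unfolding PLeq ON_def by blast
      also have "(sigma p = sigma q) = (p = q)" using inj pq by (auto dest: inj_onD)
      finally show "ip lborel (TF \<phi> \<psi> (sigma p)) (TF \<phi> \<psi> (sigma q)) = (if p = q then 1 else 0)" .
    qed
    show "countable tensor_index" by (rule countable_tensor_index)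
    fix h :: "real \<times> real \<Rightarrow> real"
    assume h: "sq lborel h"
    have "(\<integral>\<^sup>+p. ennreal ((ip lborel h (TF \<phi> \<psi> (sigma p)))\<^sup>2) \<partial>count_space (tensor_index \<times> UNIV)) =
        (\<integral>\<^sup>+x. ennreal ((ip lborel h (TF \<phi> \<psi> x))\<^sup>2) \<partial>count_space UNIV)"
      by (rule nn_integral_bij_count_space[OF bij_sigma])
    also have "\<dots> = ennreal (ip lborel h h)"
      using TF_parseval[OF P, of h] h unfolding PLeq by simp
    finally show "(\<integral>\<^sup>+p. ennreal ((ip lborel h (TF \<phi> \<psi> (sigma p)))\<^sup>2) \<partial>count_space (tensor_index \<times> UNIV)) =
        ennreal (ip lborel h h)" .
  qed
qed

end
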